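(* Let $\bar\omega_G=0$, $\bar\xi=Qu^\star$, and assume $\bar\eta\in\operatorname{im}B^T\cap\Omega$ satisfies $0=-B_G\Gamma\sin(\bar\eta)-\lambda Q^{-1}\mathbf{1}$. Consider $\dot\eta=B_S^T(\eta)\omega_G$, $M\dot\omega_G=-A\omega_G-B_G\Gamma\sin(\eta)+u$ in closed loop with the controller $\dot\xi=-L_C\xi-Q^{-1}\omega_G$, $u=Q^{-1}\xi$. Then solutions $(\eta,\omega_G,\xi)$ with $B_L\Gamma\sin(\eta(0))=B_L\Gamma\sin(\bar\eta)$ locally converge to $(\bar\eta,\bar\omega_G,\bar\xi)$; consequently $u$ locally converges to the optimal input $u^\star$.
   Context: A connected undirected graph with $n$ nodes and $m$ edges, nodes partitioned into $n_g$ generator and $n_\ell$ load nodes; $B$ is an incidence matrix partitioned row-wise as $B=\begin{bmatrix}B_G^T & B_L^T\end{bmatrix}^T$. $\Gamma=\mathrm{diag}(\gamma_k)$ is positive definite, $M,A$ positive definite diagonal. $\sin,\cos$ act elementwise, $\Omega=(-\frac{\pi}{2},\frac{\pi}{2})^m$, $\Gamma'(\eta)=\Gamma\,\mathrm{diag}(\cos(\eta_k))$, $B_S(\eta)=B_G\big(I-\Gamma'(\eta)B_L^T(B_L\Gamma'(\eta)B_L^T)^{-1}B_L\big)$, $\mathbf{1}$ is the all-ones vector. $Q=\mathrm{diag}(q_i)$ with $q_i>0$ are generation cost coefficients; $p^\ast:=B_L\Gamma\sin(\bar\eta)$; $\lambda=\mathbf{1}^Tp^\ast/\sum_{i}q_i^{-1}$;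 $u^\star=-\lambda Q^{-1}\mathbf{1}$ is the minimizer of $\frac12\bar u^TQ\bar u$ subject to $0=\mathbf{1}^T\bar u+\mathbf{1}^Tp^\ast$. $L_C$ is the Laplacian matrix of a connected undirected communication graph on the generator nodes. *)

theory Defs
  imports "HOL-Analysis.Analysis"
begin

definition diag_mat :: "real^'n \<Rightarrow> real^'n^'n" where
  "diag_mat v = (\<chi> i j. if i = j then v$i else 0)"

definition vsin :: "real^'n \<Rightarrow> real^'n" where
  "vsin v = (\<chi> i. sin (v$i))"

definition vcos :: "real^'n \<Rightarrow> real^'n" where
  "vcos v = (\<chi> i. cos (v$i))"

definition Omega :: "(real^'e) set" where
  "Omega = {x. \<forall>k. \<bar>x$k\<bar> < pi/2}"

text \<open>Incidence matrix of an (arbitrarily oriented) undirected graph: rows = nodes,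
  columns = edges; each column has exactly one entry 1, one entry -1, all others 0.\<close>
definition incidence_matrix :: "real^'e^'n \<Rightarrow> bool" where
  "incidence_matrix B \<longleftrightarrow>
     (\<forall>e. \<exists>i j. i \<noteq> j \<and> B$i$e = 1 \<and> B$j$e = -1 \<and> (\<forall>k. k \<noteq> i \<and> k \<noteq> j \<longrightarrow> B$k$e = 0))"

definition connected_incidence :: "real^'e^'n \<Rightarrow> bool" where
  "connected_incidence B \<longleftrightarrow>
     (\<forall>x y. (x, y) \<in> {(i, j). \<exists>e. B$i$e \<noteq> 0 \<and> B$j$e \<noteq> 0}\<^sup>*)"

text \<open>Row blocks of B for generator nodes (Inl) and load nodes (Inr).\<close>
definition rows_G :: "real^'e^('g::finite + 'l::finite) \<Rightarrow> real^'e^'g" where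
  "rows_G B = (\<chi> i. B $ Inl i)"

definition rows_L :: "real^'e^('g::finite + 'l::finite) \<Rightarrow> real^'e^'l" where
  "rows_L B = (\<chi> i. B $ Inr i)"

definition Gamma' :: "real^'e \<Rightarrow> real^'e \<Rightarrow> real^'e^'e" where
  "Gamma' gamma eta = diag_mat gamma ** diag_mat (vcos eta)"

definition B_S :: "real^'e^'g \<Rightarrow> real^'e^'l \<Rightarrow> real^'e \<Rightarrow> real^'e \<Rightarrow> real^'e^'g" where
  "B_S BG BL gamma eta =
     BG ** (mat 1 - Gamma' gamma eta ** transpose BL
                    ** matrix_inv (BL ** Gamma' gamma eta ** transpose BL) ** BL)"

definition laplacian :: "real^'n^'n \<Rightarrow> real^'n^'n" where
  "laplacian W = (\<chi> i j. if i = j then (\<Sum>k\<in>UNIV - {i}. W$i$k) else - W$i$j)"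

definition comm_laplacian :: "real^'n^'n \<Rightarrow> bool" where
  "comm_laplacian L \<longleftrightarrow>
     (\<exists>W. (\<forall>i j. W$i$j = W$j$i) \<and> (\<forall>i j. 0 \<le> W$i$j) \<and> (\<forall>i. W$i$i = 0)
        \<and> (\<forall>x y. (x, y) \<in> {(i, j). 0 < W$i$j}\<^sup>*) \<and> L = laplacian W)"

end

theory Submission
  imports Defs
begin




lemma vd_bound:
  fixes f :: "real \<Rightarrow> 'a::real_normed_vector"
  assumes "s \<le> t" "\<And>x. x \<in> {s..t} \<Longrightarrow> (f has_vector_derivative f' x) (at x within {s..t})"
    "\<And>x. x \<in> {s..t} \<Longrightarrow> norm (f' x) \<le> K"
  shows "norm (f t - f s) \<le> K * (t - s)"
proof -
  have "norm (f t - f s) \<le> K * norm (t - s)"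
  proof (rule differentiable_bound[of "{s..t}" f "\<lambda>x h. h *\<^sub>R f' x" K])
    fix x assume x: "x \<in> {s..t}"
    show "(f has_derivative (\<lambda>h. h *\<^sub>R f' x)) (at x within {s..t})"
      using assms(2)[OF x] by (simp add: has_vector_derivative_def)
    show "onorm (\<lambda>h. h *\<^sub>R f' x) \<le> K"
      using assms(3)[OF x] by (simp add: onorm_scaleR_left onorm_id)
  qed (use assms in auto)
  thus ?thesis using assms(1) by simp
qed

lemma vd_bound0:
  fixes f :: "real \<Rightarrow> 'a::real_normed_vector"
  assumes "0 \<le> s" "s \<le> t" "\<And>x. x \<ge> 0 \<Longrightarrow> (f has_vector_derivative f' x) (at x within {0..})"
    "\<And>x. x \<ge> 0 \<Longrightarrow> norm (f' x) \<le> K"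
  shows "norm (f t - f s) \<le> K * (t - s)"
proof (rule vd_bound[OF assms(2)])
  fix x assume x: "x \<in> {s..t}"
  hence x0: "0 \<le> x" using assms(1) by auto
  have "{s..t} \<subseteq> {0..}" using assms(1) by auto
  with assms(3)[OF x0] show "(f has_vector_derivative f' x) (at x within {s..t})"
    by (rule has_vector_derivative_within_subset)
  show "norm (f' x) \<le> K" using assms(4)[OF x0] .
qed

lemma mvt0:
  fixes V :: "real \<Rightarrow> real"
  assumes "0 \<le> s" "s \<le> t" "\<And>x. x \<ge> 0 \<Longrightarrow> (V has_real_derivative D x) (at x within {0..})"
  shows "\<exists>x\<in>{s..t}. V t - V s = D x * (t - s)"
proof -
  have "\<exists>x\<in>{s..t}. V t - V s = (*) (D x) (t - s)"
    apply (rule mvt_very_simple[OF assms(2)])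
    subgoal for x using assms(3)[of x] assms(1) by (auto simp: has_field_derivative_def[symmetric] intro: DERIV_subset)
    done
  thus ?thesis by simp
qed

lemma barbalat1:
  fixes V g :: "real \<Rightarrow> real"
  assumes dV: "\<And>t. t \<ge> 0 \<Longrightarrow> (V has_real_derivative - g t) (at t within {0..})"
    and Vnn: "\<And>t. t \<ge> 0 \<Longrightarrow> V t \<ge> 0"
    and gnn: "\<And>t. t \<ge> 0 \<Longrightarrow> g t \<ge> 0"
    and uc: "\<And>e. e > 0 \<Longrightarrow> \<exists>d>0. \<forall>s\<ge>0. \<forall>t\<ge>0. \<bar>s - t\<bar> < d \<longrightarrow> dist (g s) (g t) < e"
  shows "(g \<longlongrightarrow> 0) at_top"
proof (rule ccontr)
  have mono: "V t \<le> V s" if st: "0 \<le> s" "s \<le> t" for s t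
  proof -
    obtain x where "x \<in> {s..t}" "V t - V s = - g x * (t - s)" using mvt0[of s t V "\<lambda>x. - g x", OF st dV] by auto
    moreover have "g x * (t - s) \<ge> 0" using gnn[of x] st \<open>x \<in> {s..t}\<close> by auto
    ultimately show ?thesis by simp
  qed
  assume nt: "\<not> (g \<longlongrightarrow> 0) at_top"
  then obtain e where e: "e > 0" "\<not> eventually (\<lambda>t. dist (g t) 0 < e) at_top"
    unfolding tendsto_iff by blast
  have big: "\<exists>t\<ge>T. g t \<ge> e" for T
  proof -
    from e(2) have "\<not> (\<exists>N. \<forall>n\<ge>N. dist (g n) 0 < e)" by (simp add: eventually_at_top_linorder)
    then obtain t where "t \<ge> max T 0" "\<not> dist (g t) 0 < e" by blast
    thus ?thesis using gnn[of t] by auto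
  qed
  obtain d where d: "d > 0" "\<forall>s\<ge>0. \<forall>t\<ge>0. \<bar>s - t\<bar> < d \<longrightarrow> dist (g s) (g t) < e/2"
    using uc[of "e/2"] e by auto
  define h where "h = d/2"
  have h: "h > 0" "h < d" using d by (auto simp: h_def)
  have step: "V (t + h) \<le> V t - e * h / 2" if tg: "t \<ge> 0" "g t \<ge> e" for t
  proof -
    have "t \<le> t + h" using h by simp
    from mvt0[of t "t+h" V "\<lambda>x. - g x", OF tg(1) this dV]
    obtain x where x: "x \<in> {t..t+h}" "V (t+h) - V t = - g x * (t + h - t)" by auto
    have "\<bar>x - t\<bar> < d" using x(1) h by auto
    hence "dist (g x) (g t) < e/2" using d x(1) tg by auto
    hence "\<bar>g x - g t\<bar> < e/2" by (simp add: dist_real_def)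
    hence "g x \<ge> e/2" using tg by linarith
    hence "g x * h \<ge> e/2 * h" using h by (intro mult_right_mono) auto
    thus ?thesis using x(2) by simp
  qed
  have ind: "\<exists>t\<ge>0. V t \<le> V 0 - real k * (e * h / 2)" for k
  proof (induction k)
    case 0 show ?case by (rule exI[of _ 0]) simp
  next
    case (Suc k)
    then obtain t where t: "t \<ge> 0" "V t \<le> V 0 - real k * (e * h / 2)" by blast
    obtain s where s: "s \<ge> t" "g s \<ge> e" using big by blast
    have "V (s + h) \<le> V s - e * h / 2" using step[of s] s t by auto
    also have "\<dots> \<le> V t - e * h / 2" using mono[of t s] s t by auto
    moreover have "real (Suc k) * (e*h/2) = real k * (e*h/2) + e*h/2" by (simp add: algebra_simps)
    ultimately have "V (s + h) \<le> V 0 - real (Suc k) * (e * h / 2)" using t by linarith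
    thus ?case using t s h by (intro exI[of _ "s+h"]) auto
  qed
  have pos: "e * h / 2 > 0" using e h by auto
  obtain k where k: "V 0 / (e * h / 2) < real k" using reals_Archimedean2 by blast
  then have "V 0 < real k * (e * h / 2)" using pos by (simp add: divide_less_eq)
  then obtain t where "t \<ge> 0" "V t < 0" using ind[of k] by force
  thus False using Vnn by force
qed

lemma barbalat2:
  fixes x W :: "real \<Rightarrow> 'a::real_normed_vector"
  assumes dx: "\<And>t. t \<ge> 0 \<Longrightarrow> (x has_vector_derivative W t) (at t within {0..})"
    and xlim: "(x \<longlongrightarrow> 0) at_top"
    and uc: "\<And>e. e > 0 \<Longrightarrow> \<exists>d>0. \<forall>s\<ge>0. \<forall>t\<ge>0. \<bar>s - t\<bar> < d \<longrightarrow> dist (W s) (W t) < e"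
  shows "(W \<longlongrightarrow> 0) at_top"
  unfolding tendsto_iff
proof (intro allI impI)
  fix e :: real assume e: "e > 0"
  obtain d where d: "d > 0" "\<forall>s\<ge>0. \<forall>t\<ge>0. \<bar>s - t\<bar> < d \<longrightarrow> dist (W s) (W t) < e/3"
    using uc[of "e/3"] e by auto
  define h where "h = d/2"
  have h: "h > 0" "h < d" using d by (auto simp: h_def)
  have ehp: "e * h / 3 > 0" using e h by auto
  have "eventually (\<lambda>t. dist (x t) 0 < e * h / 3) at_top"
    using xlim ehp unfolding tendsto_iff by blast
  then obtain T where T: "\<And>t. t \<ge> T \<Longrightarrow> norm (x t) < e * h / 3"
    by (auto simp: eventually_at_top_linorder)
  show "eventually (\<lambda>t. dist (W t) 0 < e) at_top"
    unfolding eventually_at_top_linorder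
  proof (intro exI[of _ "max T 0"] allI impI)
    fix t assume t: "t \<ge> max T 0"
    define \<phi> where "\<phi> = (\<lambda>s. x s - s *\<^sub>R W t)"
    have "norm (\<phi> (t + h) - \<phi> t) \<le> e / 3 * (t + h - t)"
    proof (rule vd_bound[of t "t+h" \<phi> "\<lambda>s. W s - W t"])
      fix s assume s: "s \<in> {t..t+h}"
      have "(x has_vector_derivative W s) (at s within {t..t+h})"
        using dx[of s] s t by (auto intro: has_vector_derivative_within_subset)
      moreover have "((\<lambda>s. s *\<^sub>R W t) has_vector_derivative W t) (at s within {t..t+h})"
        using has_vector_derivative_scaleR[OF DERIV_ident has_vector_derivative_const]
        by simp
      ultimately show "(\<phi> has_vector_derivative W s - W t) (at s within {t..t + h})"
        unfolding \<phi>_def by (rule has_vector_derivative_diff)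
      have "dist (W s) (W t) < e/3" using d s t h by auto
      thus "norm (W s - W t) \<le> e/3" by (simp add: dist_norm)
    qed (use h in auto)
    hence A: "norm (x (t+h) - x t - h *\<^sub>R W t) \<le> e / 3 * h"
      by (simp add: \<phi>_def algebra_simps)
    have "h * norm (W t) = norm (h *\<^sub>R W t)" using h by simp
    also have "\<dots> = norm ((x(t+h) - x t) - (x(t+h) - x t - h *\<^sub>R W t))" by simp
    also have "\<dots> \<le> norm (x(t+h) - x t) + norm (x(t+h) - x t - h *\<^sub>R W t)" by (rule norm_triangle_ineq4)
    also have "\<dots> \<le> norm (x (t+h) - x t - h *\<^sub>R W t) + norm (x (t+h)) + norm (x t)"
      using norm_triangle_ineq4[of "x(t+h)" "x t"] by linarith
    also have "\<dots> < e/3*h + e*h/3 + e*h/3" using A T[of t] T[of "t+h"] t h by auto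
    finally have "h * norm (W t) < h * e" by (simp add: algebra_simps)
    thus "dist (W t) 0 < e" using h by simp
  qed
qed

lemma uc_comp:
  fixes z :: "real \<Rightarrow> 'a::metric_space" and F :: "'a \<Rightarrow> 'b::metric_space"
  assumes "compact C" "continuous_on C F" "\<And>t. t \<ge> 0 \<Longrightarrow> z t \<in> C"
    and lip: "\<And>s t. 0 \<le> s \<Longrightarrow> s \<le> t \<Longrightarrow> dist (z t) (z s) \<le> K * (t - s)"
    and e: "e > 0"
  shows "\<exists>d>0. \<forall>s\<ge>0. \<forall>t\<ge>0. \<bar>s - t\<bar> < d \<longrightarrow> dist (F (z s)) (F (z t)) < e"
proof -
  have "uniformly_continuous_on C F" using assms by (intro compact_uniformly_continuous)
  then obtain d where d: "d > 0" "\<forall>x\<in>C. \<forall>x'\<in>C. dist x' x < d \<longrightarrow> dist (F x') (F x) < e"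
    using e unfolding uniformly_continuous_on_def by blast
  have lip2: "dist (z s) (z t) \<le> \<bar>K\<bar> * \<bar>s - t\<bar>" if "s \<ge> 0" "t \<ge> 0" for s t
  proof (cases "s \<le> t")
    case True
    have "dist (z s) (z t) \<le> K*(t-s)" using lip[of s t] True that by (simp add: dist_commute)
    also have "K*(t-s) \<le> \<bar>K*(t-s)\<bar>" by (rule abs_ge_self)
    also have "\<dots> = \<bar>K\<bar> * \<bar>s - t\<bar>" by (simp add: abs_mult abs_minus_commute)
    finally show ?thesis .
  next
    case False
    have "dist (z s) (z t) \<le> K*(s-t)" using lip[of t s] False that by simp
    also have "K*(s-t) \<le> \<bar>K*(s-t)\<bar>" by (rule abs_ge_self)
    also have "\<dots> = \<bar>K\<bar> * \<bar>s - t\<bar>" by (simp add: abs_mult)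
    finally show ?thesis .
  qed
  show ?thesis
  proof (intro exI[of _ "d / (\<bar>K\<bar> + 1)"] conjI allI impI)
    show "d / (\<bar>K\<bar> + 1) > 0" using d by auto
    fix s t :: real assume st: "s \<ge> 0" "t \<ge> 0" "\<bar>s - t\<bar> < d / (\<bar>K\<bar> + 1)"
    have "\<bar>K\<bar> * \<bar>s - t\<bar> \<le> (\<bar>K\<bar>+1) * \<bar>s - t\<bar>" by (simp add: mult_right_mono)
    also have "\<dots> < d" using st(3) by (simp add: field_simps)
    finally have "dist (z s) (z t) < d" using lip2[OF st(1,2)] by linarith
    thus "dist (F (z s)) (F (z t)) < e" using d assms(3) st by auto
  qed
qed




declare transpose_matrix_vector[simp del]

lemma diag_mult: "diag_mat v *v x = (\<chi> i. v$i * x$i)"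
proof (subst vec_eq_iff, intro allI)
  fix i
  have "(diag_mat v *v x)$i = (\<Sum>j\<in>UNIV. if i = j then v$i * x$i else 0)"
    apply (simp only: matrix_vector_mult_def diag_mat_def vec_lambda_beta)
    apply (rule sum.cong) apply auto done
  also have "\<dots> = v$i * x$i" by simp
  finally show "(diag_mat v *v x)$i = (\<chi> i. v$i * x$i)$i" by simp
qed

lemma diag_diag: "diag_mat u ** diag_mat v = diag_mat (\<chi> i. u$i * v$i)"
proof (subst vec_eq_iff, intro allI, subst vec_eq_iff, intro allI)
  fix i j
  have "(diag_mat u ** diag_mat v)$i$j = (\<Sum>k\<in>UNIV. if k = i then (if i = j then u$i * v$i else 0) else 0)"
    apply (simp only: matrix_matrix_mult_def diag_mat_def vec_lambda_beta)
    apply (rule sum.cong) apply auto done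
  also have "\<dots> = (if i = j then u$i * v$i else 0)" by simp
  finally show "(diag_mat u ** diag_mat v)$i$j = diag_mat (\<chi> i. u$i * v$i)$i$j" by (simp add: diag_mat_def)
qed

lemma transpose_diag: "transpose (diag_mat v) = diag_mat v"
  by (simp add: vec_eq_iff diag_mat_def transpose_def)

lemma transpose_diff: "transpose (A - (C::real^'n^'m)) = transpose A - transpose C"
  by (simp add: vec_eq_iff transpose_def)

lemma Gamma'_eq: "Gamma' gamma eta = diag_mat (\<chi> e. gamma$e * cos (eta$e))"
  by (simp add: Gamma'_def diag_diag vcos_def)
lemma BT_split:
  fixes B :: "real^'e::finite^('g::finite + 'l::finite)"
  shows "transpose B *v z = transpose (rows_G B) *v (\<chi> i. z $ Inl i) + transpose (rows_L B) *v (\<chi> j. z $ Inr j)"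
proof -
  have *: "(\<Sum>n\<in>(UNIV::('g+'l) set). f n) = (\<Sum>i\<in>UNIV. f (Inl i)) + (\<Sum>j\<in>UNIV. f (Inr j))" for f :: "'g+'l \<Rightarrow> real"
    by (subst UNIV_Plus_UNIV[symmetric], subst sum.Plus) auto
  show ?thesis
    by (simp add: vec_eq_iff matrix_vector_mult_def transpose_def rows_G_def rows_L_def *)
qed

lemma B_Inl: "(B *v x) $ Inl i = (rows_G B *v x) $ i"
  by (simp add: matrix_vector_mult_def rows_G_def)
lemma B_Inr: "(B *v x) $ Inr i = (rows_L B *v x) $ i"
  by (simp add: matrix_vector_mult_def rows_L_def)

lemma inner_mv: "(x::real^'n) \<bullet> (A *v y) = (transpose A *v x) \<bullet> y"
  by (simp add: dot_lmul_matrix[symmetric] transpose_matrix_vector)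

lemma BSt_eq:
  "transpose (B_S BG BL gamma eta) *v w =
     transpose BG *v w - transpose BL *v (transpose (matrix_inv (BL ** Gamma' gamma eta ** transpose BL))
        *v (BL *v (Gamma' gamma eta *v (transpose BG *v w))))"
proof -
  let ?G = "Gamma' gamma eta"
  let ?X = "matrix_inv (BL ** ?G ** transpose BL)"
  have tG: "transpose ?G = ?G" by (simp add: Gamma'_eq transpose_diag)
  have "transpose (B_S BG BL gamma eta) = (mat 1 - transpose BL ** transpose ?X ** BL ** ?G) ** transpose BG"
    by (simp add: B_S_def matrix_transpose_mul transpose_diff tG matrix_mul_assoc)
  thus ?thesis
    by (simp add: matrix_vector_mult_diff_rdistrib flip: matrix_vector_mul_assoc)
qed




lemma col_sum_zero:
  fixes B :: "real^'e::finite^'n::finite"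
  assumes "incidence_matrix B"
  shows "(\<Sum>n\<in>UNIV. B$n$e) = 0"
proof -
  obtain i j where ij: "i \<noteq> j" "B$i$e = 1" "B$j$e = -1" "\<forall>k. k \<noteq> i \<and> k \<noteq> j \<longrightarrow> B$k$e = 0"
    using assms unfolding incidence_matrix_def by blast
  have "(\<Sum>n\<in>UNIV. B$n$e) = (\<Sum>n\<in>{i,j}. B$n$e)"
    by (rule sum.mono_neutral_right) (use ij in auto)
  also have "\<dots> = 0" using ij by simp
  finally show ?thesis .
qed

lemma sum_Bv_zero:
  fixes B :: "real^'e::finite^'n::finite"
  assumes "incidence_matrix B"
  shows "(\<Sum>n\<in>UNIV. (B *v x)$n) = 0"
proof -
  have "(\<Sum>n\<in>UNIV. (B *v x)$n) = (\<Sum>n\<in>UNIV. \<Sum>e\<in>UNIV. B$n$e * x$e)"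
    by (simp add: matrix_vector_mult_def)
  also have "\<dots> = (\<Sum>e\<in>UNIV. (\<Sum>n\<in>UNIV. B$n$e) * x$e)"
    by (subst sum.swap) (simp add: sum_distrib_right)
  also have "\<dots> = 0" using col_sum_zero[OF assms] by simp
  finally show ?thesis .
qed

lemma ker_BT_const:
  fixes B :: "real^'e::finite^'n::finite"
  assumes inc: "incidence_matrix B" and con: "connected_incidence B"
    and y: "transpose B *v y = 0"
  shows "y$n = y$m"
proof -
  let ?R = "{(i, j). \<exists>e. B$i$e \<noteq> 0 \<and> B$j$e \<noteq> 0}"
  have edge: "y$i = y$j" if ijR: "(i,j) \<in> ?R" for i j
  proof -
    obtain e where e: "B$i$e \<noteq> 0" "B$j$e \<noteq> 0" using ijR by auto
    obtain a b where ab: "a \<noteq> b" "B$a$e = 1" "B$b$e = -1" "\<forall>k. k \<noteq> a \<and> k \<noteq> b \<longrightarrow> B$k$e = 0"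
      using inc unfolding incidence_matrix_def by blast
    have "(transpose B *v y)$e = (\<Sum>n\<in>UNIV. B$n$e * y$n)"
      by (simp add: matrix_vector_mult_def transpose_def)
    also have "\<dots> = (\<Sum>n\<in>{a,b}. B$n$e * y$n)"
      by (rule sum.mono_neutral_right) (use ab in auto)
    also have "\<dots> = y$a - y$b" using ab by simp
    finally have "y$a = y$b" using y by simp
    moreover have "i \<in> {a,b}" "j \<in> {a,b}" using e ab by auto
    ultimately show ?thesis by auto
  qed
  have "(n, m) \<in> ?R\<^sup>*" using con unfolding connected_incidence_def by blast
  thus ?thesis
  proof (induction rule: rtrancl_induct)
    case base thus ?case by simp
  next
    case (step j k) thus ?case using edge[OF step(2)] by simp
  qed
qed

lemma BLT_inj:
  fixes B :: "real^'e::finite^('g::finite + 'l::finite)"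
  assumes inc: "incidence_matrix B" and con: "connected_incidence B"
    and x: "transpose (rows_L B) *v x = 0"
  shows "x = 0"
proof -
  define y :: "real^('g+'l)" where "y = (\<chi> n. case n of Inl _ \<Rightarrow> 0 | Inr j \<Rightarrow> x$j)"
  have "transpose B *v y = transpose (rows_G B) *v 0 + transpose (rows_L B) *v x"
  proof -
    have *: "(\<Sum>n\<in>(UNIV::('g+'l) set). f n) = (\<Sum>i\<in>UNIV. f (Inl i)) + (\<Sum>j\<in>UNIV. f (Inr j))" for f :: "'g+'l \<Rightarrow> real"
      by (subst UNIV_Plus_UNIV[symmetric], subst sum.Plus) auto
    show ?thesis
      by (simp add: vec_eq_iff matrix_vector_mult_def transpose_def rows_G_def rows_L_def * y_def)
  qed
  hence "transpose B *v y = 0" using x by simp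
  hence "y$(Inr j) = y$(Inl undefined)" for j by (rule ker_BT_const[OF inc con])
  thus ?thesis by (simp add: y_def vec_eq_iff)
qed

lemma laplacian_row:
  fixes W :: "real^'n::finite^'n"
  shows "(laplacian W *v x)$i = (\<Sum>j\<in>UNIV. W$i$j * (x$i - x$j))"
proof -
  have "(laplacian W *v x)$i = (\<Sum>j\<in>UNIV. (if i = j then (\<Sum>k\<in>UNIV - {i}. W$i$k) else - W$i$j) * x$j)"
    by (simp add: laplacian_def matrix_vector_mult_def)
  also have "\<dots> = (\<Sum>k\<in>UNIV - {i}. W$i$k) * x$i + (\<Sum>j\<in>UNIV - {i}. - W$i$j * x$j)"
    by (subst sum.remove[of UNIV i]) (auto intro!: sum.cong)
  also have "\<dots> = (\<Sum>j\<in>UNIV - {i}. W$i$j * (x$i - x$j))"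
    by (simp add: sum_distrib_right sum_distrib_left sum.distrib[symmetric] algebra_simps sum_negf)
  also have "\<dots> = (\<Sum>j\<in>UNIV. W$i$j * (x$i - x$j))"
    by (rule sum.mono_neutral_left) auto
  finally show ?thesis .
qed

lemma laplacian_sum_zero:
  fixes W :: "real^'n::finite^'n"
  assumes sym: "\<forall>i j. W$i$j = W$j$i"
  shows "(\<Sum>i\<in>UNIV. (laplacian W *v x)$i) = 0"
proof -
  have "(\<Sum>i\<in>UNIV. (laplacian W *v x)$i) = (\<Sum>i\<in>UNIV. \<Sum>j\<in>UNIV. W$i$j * x$i) - (\<Sum>i\<in>UNIV. \<Sum>j\<in>UNIV. W$i$j * x$j)"
    by (simp add: laplacian_row algebra_simps sum_subtractf)
  also have "(\<Sum>i\<in>UNIV. \<Sum>j\<in>UNIV. W$i$j * x$j) = (\<Sum>i\<in>UNIV. \<Sum>j\<in>UNIV. W$i$j * x$i)"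
    by (subst sum.swap) (simp add: sym)
  finally show ?thesis by simp
qed

lemma laplacian_quad:
  fixes W :: "real^'n::finite^'n"
  assumes sym: "\<forall>i j. W$i$j = W$j$i"
  shows "x \<bullet> (laplacian W *v x) = (\<Sum>i\<in>UNIV. \<Sum>j\<in>UNIV. W$i$j * (x$i - x$j)^2) / 2"
proof -
  have A: "x \<bullet> (laplacian W *v x) = (\<Sum>i\<in>UNIV. \<Sum>j\<in>UNIV. W$i$j * x$i * (x$i - x$j))"
    by (simp add: inner_vec_def laplacian_row sum_distrib_left algebra_simps)
  also have "\<dots> = (\<Sum>i\<in>UNIV. \<Sum>j\<in>UNIV. W$i$j * x$j * (x$j - x$i))"
    by (subst sum.swap) (simp add: sym)
  finally have B: "x \<bullet> (laplacian W *v x) = (\<Sum>i\<in>UNIV. \<Sum>j\<in>UNIV. W$i$j * x$j * (x$j - x$i))" .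
  have "2 * (x \<bullet> (laplacian W *v x)) = (\<Sum>i\<in>UNIV. \<Sum>j\<in>UNIV. W$i$j * x$i * (x$i - x$j) + W$i$j * x$j * (x$j - x$i))"
    using A B by (simp add: sum.distrib)
  also have "\<dots> = (\<Sum>i\<in>UNIV. \<Sum>j\<in>UNIV. W$i$j * (x$i - x$j)^2)"
    by (intro sum.cong refl) (simp add: power2_eq_square algebra_simps)
  finally show ?thesis by simp
qed




lemma cos_ge_rho:
  fixes z rho :: real
  assumes "rho < pi/2" "\<bar>z\<bar> \<le> rho"
  shows "cos rho \<le> cos z"
proof -
  have "cos rho \<le> cos \<bar>z\<bar>" by (rule cos_monotone_0_pi_le) (use assms pi_gt_zero in auto)
  thus ?thesis by simp
qed

lemma sin_diff_mono:
  fixes x y rho :: real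
  assumes "rho < pi/2" "\<bar>x\<bar> \<le> rho" "\<bar>y\<bar> \<le> rho" "y < x"
  shows "cos rho * (x - y) \<le> sin x - sin y"
proof -
  obtain z where z: "y < z" "z < x" "sin x - sin y = (x - y) * cos z"
    using MVT2[OF assms(4), of sin cos] by (auto intro: DERIV_sin)
  have "\<bar>z\<bar> \<le> rho" using z assms by auto
  hence "cos rho \<le> cos z" using cos_ge_rho assms(1) by blast
  thus ?thesis using z assms(4) by (simp add: mult_left_mono mult.commute)
qed

lemma sin_prod_bound:
  fixes x y rho :: real
  assumes "rho < pi/2" "\<bar>x\<bar> \<le> rho" "\<bar>y\<bar> \<le> rho"
  shows "cos rho * (x - y)^2 \<le> (x - y) * (sin x - sin y)"
proof (cases "y < x")
  case True
  with sin_diff_mono[OF assms] have "cos rho * (x - y) * (x - y) \<le> (sin x - sin y) * (x - y)"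
    by (intro mult_right_mono) auto
  thus ?thesis by (simp add: power2_eq_square algebra_simps)
next
  case False
  show ?thesis
  proof (cases "x = y")
    case True thus ?thesis by simp
  next
    case False
    hence "x < y" using \<open>\<not> y < x\<close> by auto
    with sin_diff_mono[OF assms(1,3,2)] have "cos rho * (y - x) * (y - x) \<le> (sin y - sin x) * (y - x)"
      by (intro mult_right_mono) auto
    thus ?thesis by (simp add: power2_eq_square algebra_simps)
  qed
qed

lemma breg_lower:
  fixes x y rho :: real
  assumes rho: "rho < pi/2" and xr: "\<bar>x\<bar> \<le> rho" and yr: "\<bar>y\<bar> \<le> rho"
  shows "cos rho / 2 * (x - y)^2 \<le> cos y - cos x - sin y * (x - y)"
proof -
  define \<phi> where "\<phi> = (\<lambda>s. cos y - cos s - sin y * (s - y) - cos rho / 2 * (s - y)^2)"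
  have d: "DERIV \<phi> s :> sin s - sin y - cos rho * (s - y)" for s
    unfolding \<phi>_def by (auto intro!: derivative_eq_intros simp: power2_eq_square algebra_simps)
  have "\<phi> x \<ge> 0"
  proof (cases "y < x")
    case True
    obtain z where z: "y < z" "z < x" "\<phi> x - \<phi> y = (x - y) * (sin z - sin y - cos rho * (z - y))"
      using MVT2[OF True d] by blast
    have "\<bar>z\<bar> \<le> rho" using z xr yr by auto
    hence "cos rho * (z - y) \<le> sin z - sin y" using sin_diff_mono[OF rho _ yr z(1)] by blast
    moreover have "\<phi> y = 0" by (simp add: \<phi>_def)
    ultimately show ?thesis using z True by (simp add: mult_nonneg_nonneg)
  next
    case False
    show ?thesis
    proof (cases "x = y")
      case True thus ?thesis by (simp add: \<phi>_def)
    next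
      case False
      hence xy: "x < y" using \<open>\<not> y < x\<close> by auto
      obtain z where z: "x < z" "z < y" "\<phi> y - \<phi> x = (y - x) * (sin z - sin y - cos rho * (z - y))"
        using MVT2[OF xy d] by blast
      have "\<bar>z\<bar> \<le> rho" using z xr yr by auto
      hence "cos rho * (y - z) \<le> sin y - sin z" using sin_diff_mono[OF rho yr _ z(2)] by blast
      moreover have "\<phi> y = 0" by (simp add: \<phi>_def)
      ultimately have "(y - x) * (sin z - sin y - cos rho * (z - y)) \<le> 0"
        using xy by (intro mult_nonneg_nonpos) (auto simp: algebra_simps)
      thus ?thesis using z \<open>\<phi> y = 0\<close> by linarith
    qed
  qed
  thus ?thesis by (simp add: \<phi>_def)
qed





locale plant =
  fixes B :: "real^'e::finite^('g::finite + 'l::finite)"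
    and gamma :: "real^'e"
    and mm a q :: "real^'g"
    and LC :: "real^'g^'g"
    and etabar :: "real^'e"
    and lam :: real
  assumes B_inc: "incidence_matrix B"
    and B_conn: "connected_incidence B"
    and gamma_pos: "\<forall>k. 0 < gamma$k"
    and M_pos: "\<forall>i. 0 < mm$i"
    and A_pos: "\<forall>i. 0 < a$i"
    and q_pos: "\<forall>i. 0 < q$i"
    and LC_lap: "comm_laplacian LC"
    and etabar_im: "etabar \<in> range (\<lambda>th. transpose B *v th)"
    and etabar_Omega: "etabar \<in> Omega"
    and etabar_eq: "0 = - ((rows_G B ** diag_mat gamma) *v vsin etabar) - lam *s (\<chi> i. 1 / q$i)"
begin

definition "Gv eta = (\<chi> e. gamma$e * sin (eta$e))"
definition "NN eta = rows_L B ** Gamma' gamma eta ** transpose (rows_L B)"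
definition "gmin = Min (range (\<lambda>e. gamma$e))"
definition "gmax = Max (range (\<lambda>e. gamma$e))"
definition "m0 = Min (range (\<lambda>e. pi/2 - \<bar>etabar$e\<bar>))"
definition "rr = m0 / 2"
definition "rho = pi/2 - rr"
definition "kap = cos rho"
definition "xib = (\<chi> i::'g. - lam)"
definition "qi = (\<chi> i::'g. 1 / q$i)"
definition "cB = (SOME c. c > 0 \<and> (\<forall>x. c * norm x \<le> norm (transpose (rows_L B) *v x)))"

lemma gmin_le: "gmin \<le> gamma$e"
  unfolding gmin_def by (rule Min_le) auto
lemma gmin_pos: "gmin > 0"
proof -
  have "gmin \<in> range (\<lambda>e. gamma$e)" unfolding gmin_def by (rule Min_in) auto
  thus ?thesis using gamma_pos by auto
qed
lemma gmax_ge: "gamma$e \<le> gmax"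
  unfolding gmax_def by (rule Max_ge) auto

lemma m0_le: "m0 \<le> pi/2 - \<bar>etabar$e\<bar>"
  unfolding m0_def by (rule Min_le) auto
lemma m0_pos: "m0 > 0"
proof -
  have "m0 \<in> range (\<lambda>e. pi/2 - \<bar>etabar$e\<bar>)" unfolding m0_def by (rule Min_in) auto
  thus ?thesis using etabar_Omega by (auto simp: Omega_def)
qed
lemma rr_pos: "rr > 0" using m0_pos by (simp add: rr_def)
lemma rho_lt: "rho < pi/2" using rr_pos by (simp add: rho_def)
lemma rho_pos: "rho > 0"
proof -
  have "m0 \<le> pi/2" using m0_le[of undefined] by simp
  thus ?thesis by (simp add: rho_def rr_def) (use pi_gt_zero in linarith)
qed
lemma kap_pos: "kap > 0"
  unfolding kap_def using rho_lt rho_pos by (intro cos_gt_zero_pi) auto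

lemma region:
  assumes "eta \<in> cball etabar rr"
  shows "\<bar>eta$e\<bar> \<le> rho"
proof -
  have "\<bar>eta$e - etabar$e\<bar> \<le> norm (eta - etabar)"
    using component_le_norm_cart[of "eta - etabar" e] by simp
  also have "\<dots> \<le> rr" using assms by (simp add: dist_norm norm_minus_commute)
  finally show ?thesis using m0_le[of e] abs_triangle_ineq[of "eta$e - etabar$e" "etabar$e"]
    by (simp add: rho_def rr_def)
qed

lemma region_bar: "\<bar>etabar$e\<bar> \<le> rho"
  using region[of etabar] rr_pos by simp

lemma cos_region: "eta \<in> cball etabar rr \<Longrightarrow> kap \<le> cos (eta$e)"
  unfolding kap_def using region cos_ge_rho rho_lt by blast

lemma cB_prop: "cB > 0 \<and> (\<forall>x. cB * norm x \<le> norm (transpose (rows_L B) *v x))"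
proof -
  have inj: "inj ((*v) (transpose (rows_L B)))"
  proof (rule injI)
    fix x y assume "transpose (rows_L B) *v x = transpose (rows_L B) *v y"
    hence "transpose (rows_L B) *v (x - y) = 0" by (simp add: matrix_vector_mult_diff_distrib)
    hence "x - y = 0" by (rule BLT_inj[OF B_inc B_conn])
    thus "x = y" by simp
  qed
  obtain c where "c > 0" "\<And>x. c * norm x \<le> norm (transpose (rows_L B) *v x)"
    using linear_inj_bounded_below_pos[OF _ inj] by (auto intro: matrix_vector_mul_linear)
  hence "\<exists>c. c > 0 \<and> (\<forall>x. c * norm x \<le> norm (transpose (rows_L B) *v x))" by blast
  thus ?thesis unfolding cB_def by (rule someI_ex)
qed

lemma norm_sq_sum: "(norm (x::real^'n))^2 = (\<Sum>i\<in>UNIV. (x$i)^2)"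
  unfolding power2_norm_eq_inner inner_vec_def by (simp add: power2_eq_square)

lemma NN_quad:
  assumes "eta \<in> cball etabar rr"
  shows "gmin * kap * cB^2 * (norm x)^2 \<le> x \<bullet> (NN eta *v x)"
proof -
  let ?u = "transpose (rows_L B) *v x"
  have "x \<bullet> (NN eta *v x) = ?u \<bullet> (Gamma' gamma eta *v ?u)"
    by (simp add: NN_def inner_mv flip: matrix_vector_mul_assoc)
  also have "\<dots> = (\<Sum>e\<in>UNIV. gamma$e * cos (eta$e) * (?u$e)^2)"
    by (simp add: Gamma'_eq diag_mult inner_vec_def power2_eq_square algebra_simps)
  finally have A: "x \<bullet> (NN eta *v x) = (\<Sum>e\<in>UNIV. gamma$e * cos (eta$e) * (?u$e)^2)" .
  have "(\<Sum>e\<in>UNIV. gmin * kap * (?u$e)^2) \<le> (\<Sum>e\<in>UNIV. gamma$e * cos (eta$e) * (?u$e)^2)"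
  proof (rule sum_mono)
    fix e
    have "gmin * kap \<le> gamma$e * cos (eta$e)"
      using gmin_le[of e] cos_region[OF assms, of e] gmin_pos kap_pos by (intro mult_mono) auto
    thus "gmin * kap * (?u$e)^2 \<le> gamma$e * cos (eta$e) * (?u$e)^2" by (intro mult_right_mono) auto
  qed
  hence B: "gmin * kap * (norm ?u)^2 \<le> x \<bullet> (NN eta *v x)"
    using A by (simp add: norm_sq_sum sum_distrib_left)
  have "cB * norm x \<le> norm ?u" using cB_prop by blast
  hence "(cB * norm x)^2 \<le> (norm ?u)^2" using cB_prop by (intro power_mono) auto
  hence "gmin * kap * (cB * norm x)^2 \<le> gmin * kap * (norm ?u)^2"
    using gmin_pos kap_pos by (intro mult_left_mono) auto
  thus ?thesis using B by (simp add: power_mult_distrib algebra_simps)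
qed

lemma NN_sym: "transpose (NN eta) = NN eta"
  by (simp add: NN_def matrix_transpose_mul Gamma'_eq transpose_diag matrix_mul_assoc)

lemma NN_inv:
  assumes "eta \<in> cball etabar rr"
  shows "NN eta ** transpose (matrix_inv (NN eta)) = mat 1"
proof -
  have c0: "gmin * kap * cB^2 > 0" using gmin_pos kap_pos cB_prop by auto
  have inj: "inj ((*v) (NN eta))"
  proof (rule injI)
    fix x y assume "NN eta *v x = NN eta *v y"
    hence z: "NN eta *v (x - y) = 0" by (simp add: matrix_vector_mult_diff_distrib)
    have "gmin * kap * cB^2 * (norm (x - y))^2 \<le> 0" using NN_quad[OF assms, of "x - y"] z by simp
    moreover have "0 \<le> gmin * kap * cB^2 * (norm (x - y))^2" using c0 by simp
    ultimately have "gmin * kap * cB^2 * (norm (x - y))^2 = 0" by linarith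
    hence "(norm (x - y))^2 = 0" using gmin_pos kap_pos cB_prop by simp
    thus "x = y" by simp
  qed
  then obtain A' where "A' ** NN eta = mat 1" using matrix_left_invertible_injective by blast
  hence "NN eta ** A' = mat 1 \<and> A' ** NN eta = mat 1" using matrix_left_right_inverse by blast
  hence "NN eta ** matrix_inv (NN eta) = mat 1 \<and> matrix_inv (NN eta) ** NN eta = mat 1"
    unfolding matrix_inv_def by (rule someI)
  hence "transpose (matrix_inv (NN eta) ** NN eta) = mat 1" by simp
  thus ?thesis by (simp add: matrix_transpose_mul NN_sym)
qed

end


context plant begin

lemma vsin_Gv: "diag_mat gamma *v vsin eta = Gv eta"
  by (simp add: diag_mult vsin_def Gv_def)
lemma Bgsin: "(rows_G B ** diag_mat gamma) *v vsin eta = rows_G B *v Gv eta"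
  by (simp add: vsin_Gv flip: matrix_vector_mul_assoc)
lemma etabar_eq': "rows_G B *v Gv etabar = - (lam *s qi)"
  using etabar_eq by (simp add: Bgsin qi_def eq_neg_iff_add_eq_0 add.commute) (metis add.commute ab_left_minus)

lemma mv_neg: "A *v (- x) = - (A *v (x::real^'n))"
  by (simp add: matrix_vector_mult_def vec_eq_iff sum_negf)

lemma gmax_pos: "gmax > 0" using gmin_pos gmin_le[of undefined] gmax_ge[of undefined] by linarith

lemma B_inner_split:
  "(B *v x) \<bullet> z = (rows_G B *v x) \<bullet> (\<chi> i. z$Inl i) + (rows_L B *v x) \<bullet> (\<chi> j. z $ Inr j)"
proof -
  have *: "(\<Sum>n\<in>(UNIV::('g+'l) set). f n) = (\<Sum>i\<in>UNIV. f (Inl i)) + (\<Sum>j\<in>UNIV. f (Inr j))" for f :: "'g+'l \<Rightarrow> real"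
    by (subst UNIV_Plus_UNIV[symmetric], subst sum.Plus) auto
  show ?thesis by (simp add: inner_vec_def * B_Inl B_Inr)
qed

definition "Xt eta = transpose (matrix_inv (NN eta))"
definition "wL eta w = - (Xt eta *v (rows_L B *v (Gamma' gamma eta *v (transpose (rows_G B) *v w))))"
definition "zext eta w = (\<chi> n. case n of Inl i \<Rightarrow> w$i | Inr j \<Rightarrow> wL eta w $ j)"

lemma BSt_dec: "transpose (B_S (rows_G B) (rows_L B) gamma eta) *v w = transpose B *v zext eta w"
proof -
  have 1: "(\<chi> i. zext eta w $ Inl i) = w" by (simp add: zext_def vec_eq_iff)
  have 2: "(\<chi> j. zext eta w $ Inr j) = wL eta w" by (simp add: zext_def vec_eq_iff)
  show ?thesis
    by (simp add: BSt_eq BT_split 1 2 wL_def Xt_def NN_def mv_neg algebra_simps)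
qed

lemma zext_Inl: "(\<chi> i. zext eta w $ Inl i) = w" by (simp add: zext_def vec_eq_iff)
lemma zext_Inr: "(\<chi> j. zext eta w $ Inr j) = wL eta w" by (simp add: zext_def vec_eq_iff)

lemma kill:
  assumes "eta \<in> cball etabar rr"
  shows "rows_L B *v (Gamma' gamma eta *v (transpose (B_S (rows_G B) (rows_L B) gamma eta) *v w)) = 0"
proof -
  let ?y = "rows_L B *v (Gamma' gamma eta *v (transpose (rows_G B) *v w))"
  have 1: "rows_L B *v (Gamma' gamma eta *v (transpose (B_S (rows_G B) (rows_L B) gamma eta) *v w))
        = ?y - NN eta *v (Xt eta *v ?y)"
    by (simp add: BSt_eq Xt_def NN_def matrix_vector_mult_diff_distrib matrix_vector_mul_assoc matrix_mul_assoc)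
  have 2: "NN eta *v (Xt eta *v ?y) = ?y"
    by (subst matrix_vector_mul_assoc) (simp only: Xt_def NN_inv[OF assms] matrix_vector_mul_lid)
  show ?thesis unfolding 1 2 by simp
qed

lemma Gm_bound: "norm (Gamma' gamma eta *v u) \<le> gmax * norm u"
proof -
  have "norm (Gamma' gamma eta *v u) \<le> norm (gmax *\<^sub>R u)"
  proof (rule norm_le_componentwise_cart)
    fix e
    have "\<bar>gamma$e * cos (eta$e) * u$e\<bar> = gamma$e * \<bar>cos (eta$e)\<bar> * \<bar>u$e\<bar>"
      using gamma_pos[rule_format, of e] by (simp add: abs_mult)
    also have "\<dots> \<le> gmax * 1 * \<bar>u$e\<bar>"
      using gmax_ge[of e] gamma_pos abs_cos_le_one gmax_pos by (intro mult_right_mono mult_mono) auto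
    finally show "norm ((Gamma' gamma eta *v u)$e) \<le> norm ((gmax *\<^sub>R u)$e)"
      using gmin_pos gmin_le[of e] gmax_ge[of e] by (simp add: Gamma'_eq diag_mult abs_mult)
  qed
  also have "\<dots> = gmax * norm u" using gmax_pos by simp
  finally show ?thesis .
qed

lemma Xt_bound:
  assumes "eta \<in> cball etabar rr"
  shows "gmin * kap * cB^2 * norm (Xt eta *v y) \<le> norm y"
proof -
  let ?x = "Xt eta *v y"
  have Nx: "NN eta *v ?x = y" using NN_inv[OF assms] by (simp add: Xt_def matrix_vector_mul_assoc)
  have "gmin * kap * cB^2 * (norm ?x)^2 \<le> ?x \<bullet> y" using NN_quad[OF assms, of ?x] Nx by simp
  also have "\<dots> \<le> norm ?x * norm y" by (rule norm_cauchy_schwarz)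
  finally have "norm ?x * (gmin * kap * cB^2 * norm ?x) \<le> norm ?x * norm y" by (simp add: power2_eq_square algebra_simps)
  thus ?thesis
    by (cases "norm ?x = 0") (use gmin_pos kap_pos cB_prop in \<open>auto simp: mult_le_cancel_left_pos\<close>)
qed

lemma BSt_bound: "\<exists>K. \<forall>eta\<in>cball etabar rr. \<forall>w. norm (transpose (B_S (rows_G B) (rows_L B) gamma eta) *v w) \<le> K * norm w"
proof -
  obtain K1 where K1: "\<And>x. norm (transpose (rows_G B) *v x) \<le> norm x * K1" "K1 > 0"
    using bounded_linear.pos_bounded[OF matrix_vector_mul_bounded_linear] by blast
  obtain K2 where K2: "\<And>x. norm (transpose (rows_L B) *v x) \<le> norm x * K2" "K2 > 0"
    using bounded_linear.pos_bounded[OF matrix_vector_mul_bounded_linear] by blast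
  obtain K3 where K3: "\<And>x. norm (rows_L B *v x) \<le> norm x * K3" "K3 > 0"
    using bounded_linear.pos_bounded[OF matrix_vector_mul_bounded_linear] by blast
  define c0 where "c0 = gmin * kap * cB^2"
  have c0: "c0 > 0" using gmin_pos kap_pos cB_prop by (simp add: c0_def)
  show ?thesis
  proof (intro exI[of _ "K1 + K2 * (K3 * gmax * K1 / c0)"] ballI allI)
    fix eta w assume eta: "eta \<in> cball etabar rr"
    let ?u = "transpose (rows_G B) *v w"
    let ?y = "rows_L B *v (Gamma' gamma eta *v ?u)"
    have "norm ?y \<le> norm (Gamma' gamma eta *v ?u) * K3" by (rule K3)
    also have "\<dots> \<le> gmax * norm ?u * K3" using Gm_bound K3(2) by (intro mult_right_mono) auto
    also have "\<dots> \<le> gmax * (norm w * K1) * K3" using K1 K3(2) gmax_pos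
      by (intro mult_right_mono mult_left_mono) (auto intro: order_trans[OF less_imp_le])
    finally have y: "norm ?y \<le> K3 * gmax * K1 * norm w" by (simp add: algebra_simps)
    have "c0 * norm (Xt eta *v ?y) \<le> norm ?y" using Xt_bound[OF eta] by (simp add: c0_def)
    hence x: "norm (Xt eta *v ?y) \<le> K3 * gmax * K1 / c0 * norm w" using y c0
      by (simp add: field_simps)
    have "transpose (B_S (rows_G B) (rows_L B) gamma eta) *v w = ?u - transpose (rows_L B) *v (Xt eta *v ?y)"
      by (simp add: BSt_eq Xt_def NN_def)
    hence "norm (transpose (B_S (rows_G B) (rows_L B) gamma eta) *v w) \<le> norm ?u + norm (transpose (rows_L B) *v (Xt eta *v ?y))"
      by (simp add: norm_triangle_ineq4)
    also have "\<dots> \<le> norm w * K1 + norm (Xt eta *v ?y) * K2" using K1 K2 by (intro add_mono) auto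
    also have "\<dots> \<le> norm w * K1 + (K3 * gmax * K1 / c0 * norm w) * K2" using x K2 K1 by (intro add_mono mult_right_mono) auto
    finally show "norm (transpose (B_S (rows_G B) (rows_L B) gamma eta) *v w) \<le> (K1 + K2 * (K3 * gmax * K1 / c0)) * norm w"
      by (simp add: algebra_simps)
  qed
qed

definition "Dr eta = (\<Sum>e\<in>UNIV. gamma$e * (cos (etabar$e) - cos (eta$e) - sin (etabar$e) * (eta$e - etabar$e)))"

lemma Dr_lower:
  assumes "eta \<in> cball etabar rr"
  shows "gmin * kap / 2 * (dist eta etabar)^2 \<le> Dr eta"
proof -
  have "gmin * kap / 2 * (dist eta etabar)^2 = (\<Sum>e\<in>UNIV. gmin * (kap / 2 * (eta$e - etabar$e)^2))"
    by (simp add: dist_norm norm_sq_sum sum_distrib_left algebra_simps)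
  also have "\<dots> \<le> Dr eta" unfolding Dr_def
  proof (rule sum_mono)
    fix e
    have "kap / 2 * (eta$e - etabar$e)^2 \<le> cos (etabar$e) - cos (eta$e) - sin (etabar$e) * (eta$e - etabar$e)"
      unfolding kap_def by (rule breg_lower[OF rho_lt region[OF assms] region_bar])
    moreover have "0 \<le> kap / 2 * (eta$e - etabar$e)^2" using kap_pos by simp
    ultimately show "gmin * (kap / 2 * (eta$e - etabar$e)^2) \<le> gamma$e * (cos (etabar$e) - cos (eta$e) - sin (etabar$e) * (eta$e - etabar$e))"
      using gmin_le[of e] gmin_pos by (intro mult_mono) auto
  qed
  finally show ?thesis .
qed

end



lemma comp_deriv: "(f has_vector_derivative f') F \<Longrightarrow> ((\<lambda>s. f s $ i) has_real_derivative f' $ i) F"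
  unfolding has_real_derivative_iff_has_vector_derivative
  by (rule bounded_linear.has_vector_derivative[OF bounded_linear_vec_nth])

context plant begin

definition "WW = (SOME W. (\<forall>i j. W$i$j = W$j$i) \<and> (\<forall>i j. 0 \<le> W$i$j) \<and> (\<forall>i. W$i$i = 0)
        \<and> (\<forall>x y. (x, y) \<in> {(i, j). 0 < W$i$j}\<^sup>*) \<and> LC = laplacian W)"

lemma WW: "(\<forall>i j. WW$i$j = WW$j$i) \<and> (\<forall>i j. 0 \<le> WW$i$j) \<and> (\<forall>i. WW$i$i = 0)
        \<and> (\<forall>x y. (x, y) \<in> {(i, j). 0 < WW$i$j}\<^sup>*) \<and> LC = laplacian WW"
  unfolding WW_def using LC_lap unfolding comm_laplacian_def by (rule someI_ex)

lemma LC_quad: "x \<bullet> (LC *v x) = (\<Sum>i\<in>UNIV. \<Sum>j\<in>UNIV. WW$i$j * (x$i - x$j)^2) / 2"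
proof -
  have "LC = laplacian WW" "\<forall>i j. WW$i$j = WW$j$i" using WW by blast+
  thus ?thesis using laplacian_quad[of WW x] by simp
qed

lemma LC_nonneg: "0 \<le> x \<bullet> (LC *v x)"
  unfolding LC_quad using WW by (auto intro!: sum_nonneg)

lemma LC_edge: "WW$i$j * (x$i - x$j)^2 \<le> 2 * (x \<bullet> (LC *v x))"
proof -
  have "WW$i$j * (x$i - x$j)^2 \<le> (\<Sum>j\<in>UNIV. WW$i$j * (x$i - x$j)^2)"
    by (rule member_le_sum) (use WW in auto)
  also have "\<dots> \<le> (\<Sum>i\<in>UNIV. \<Sum>j\<in>UNIV. WW$i$j * (x$i - x$j)^2)"
    by (rule member_le_sum[of i]) (use WW in \<open>auto intro!: sum_nonneg\<close>)
  finally show ?thesis unfolding LC_quad by simp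
qed

lemma LC_sum: "(\<Sum>i\<in>UNIV. (LC *v x)$i) = 0"
proof -
  have "LC = laplacian WW" "\<forall>i j. WW$i$j = WW$j$i" using WW by blast+
  thus ?thesis using laplacian_sum_zero[of WW x] by simp
qed

definition "Kin w = (\<Sum>i\<in>UNIV. mm$i * (w$i)^2) / 2"
definition "Exi x = (\<Sum>i\<in>UNIV. (x$i - xib$i)^2) / 2"
definition "gf w x = (\<Sum>i\<in>UNIV. a$i * (w$i)^2) + x \<bullet> (LC *v x)"

lemma gf_nonneg: "0 \<le> gf w x"
  unfolding gf_def using LC_nonneg A_pos by (auto intro!: add_nonneg_nonneg sum_nonneg mult_nonneg_nonneg simp: less_imp_le)

lemma Kin_nonneg: "0 \<le> Kin w"
  unfolding Kin_def using M_pos by (auto intro!: sum_nonneg mult_nonneg_nonneg simp: less_imp_le)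
lemma Exi_nonneg: "0 \<le> Exi x"
  unfolding Exi_def by (auto intro!: sum_nonneg)
lemma Dr_nonneg: "eta \<in> cball etabar rr \<Longrightarrow> 0 \<le> Dr eta"
proof -
  assume e: "eta \<in> cball etabar rr"
  have "0 \<le> gmin * kap / 2 * (dist eta etabar)^2" using gmin_pos kap_pos by simp
  thus ?thesis using Dr_lower[OF e] by linarith
qed

lemma diag_sym: "u \<bullet> (diag_mat d *v v) = v \<bullet> (diag_mat d *v u)"
  by (simp add: diag_mult inner_vec_def algebra_simps)

lemma Vdot_alg:
  assumes We: "diag_mat mm *v Wv = - (diag_mat a *v w) - rows_G B *v Gv et + diag_mat qi *v x"
    and inv: "rows_L B *v Gv et = rows_L B *v Gv etabar"
    and zw: "(\<chi> i. z$Inl i) = w"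
  shows "w \<bullet> (diag_mat mm *v Wv) + (Gv et - Gv etabar) \<bullet> (transpose B *v z)
         + (x - xib) \<bullet> (- (LC *v x) - diag_mat qi *v w) = - gf w x"
proof -
  have 1: "(Gv et - Gv etabar) \<bullet> (transpose B *v z) = (rows_G B *v Gv et) \<bullet> w - (rows_G B *v Gv etabar) \<bullet> w"
  proof -
    have "(Gv et - Gv etabar) \<bullet> (transpose B *v z) = (B *v (Gv et - Gv etabar)) \<bullet> z"
      by (simp add: inner_mv)
    also have "\<dots> = (rows_G B *v (Gv et - Gv etabar)) \<bullet> w + (rows_L B *v (Gv et - Gv etabar)) \<bullet> (\<chi> j. z $ Inr j)"
      by (simp add: B_inner_split zw)
    also have "\<dots> = (rows_G B *v Gv et) \<bullet> w - (rows_G B *v Gv etabar) \<bullet> w"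
      using inv by (simp add: matrix_vector_mult_diff_distrib inner_diff_left)
    finally show ?thesis .
  qed
  have 2: "(rows_G B *v Gv etabar) \<bullet> w = - lam * (qi \<bullet> w)"
    by (simp add: etabar_eq' inner_vec_def sum_distrib_left algebra_simps)
  have 3: "xib \<bullet> (LC *v x) = 0"
  proof -
    have "xib \<bullet> (LC *v x) = - lam * (\<Sum>i\<in>UNIV. (LC *v x)$i)"
      by (simp add: xib_def inner_vec_def sum_distrib_left)
    thus ?thesis using LC_sum by simp
  qed
  have 4: "xib \<bullet> (diag_mat qi *v w) = - lam * (qi \<bullet> w)"
    by (simp add: xib_def inner_vec_def diag_mult sum_distrib_left)
  have 5: "w \<bullet> (diag_mat a *v w) = (\<Sum>i\<in>UNIV. a$i * (w$i)^2)"
    by (simp add: diag_mult inner_vec_def power2_eq_square algebra_simps)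
  have 6: "w \<bullet> (diag_mat qi *v x) = x \<bullet> (diag_mat qi *v w)" by (rule diag_sym)
  have 7: "w \<bullet> (rows_G B *v Gv et) = (rows_G B *v Gv et) \<bullet> w" by (rule inner_commute)
  have "w \<bullet> (diag_mat mm *v Wv) = - (w \<bullet> (diag_mat a *v w)) - w \<bullet> (rows_G B *v Gv et) + w \<bullet> (diag_mat qi *v x)"
    by (simp add: We inner_diff_right inner_add_right)
  moreover have "(x - xib) \<bullet> (- (LC *v x) - diag_mat qi *v w) =
       - (x \<bullet> (LC *v x)) + xib \<bullet> (LC *v x) - x \<bullet> (diag_mat qi *v w) + xib \<bullet> (diag_mat qi *v w)"
    by (simp add: inner_diff_right inner_diff_left inner_minus_right)
  ultimately show ?thesis using 1 2 3 4 5 6 7 unfolding gf_def by linarith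
qed

end



locale sol = plant B gamma mm a q LC etabar lam
  for B :: "real^'e::finite^('g::finite + 'l::finite)"
    and gamma :: "real^'e"
    and mm a q :: "real^'g"
    and LC :: "real^'g^'g"
    and etabar :: "real^'e"
    and lam :: real +
  fixes eta :: "real \<Rightarrow> real^'e" and omega xi W :: "real \<Rightarrow> real^'g"
  assumes deta: "\<And>t. 0 \<le> t \<Longrightarrow> (eta has_vector_derivative
            (transpose (B_S (rows_G B) (rows_L B) gamma (eta t)) *v omega t)) (at t within {0..})"
    and domega: "\<And>t. 0 \<le> t \<Longrightarrow> (omega has_vector_derivative W t) (at t within {0..})"
    and Weq: "\<And>t. 0 \<le> t \<Longrightarrow> diag_mat mm *v W t = - (diag_mat a *v omega t)
                    - ((rows_G B ** diag_mat gamma) *v vsin (eta t))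
                    + diag_mat (\<chi> i. 1 / q$i) *v xi t"
    and dxi: "\<And>t. 0 \<le> t \<Longrightarrow> (xi has_vector_derivative
            (- (LC *v xi t) - diag_mat (\<chi> i. 1 / q$i) *v omega t)) (at t within {0..})"
    and eta0: "eta 0 \<in> range (\<lambda>th. transpose B *v th)"
    and inv0: "rows_L B *v (diag_mat gamma *v vsin (eta 0)) = rows_L B *v (diag_mat gamma *v vsin etabar)"
begin

lemma kin_alg: "(\<Sum>i\<in>UNIV. m$i * (of_nat 2 * (u$i * v$i ^ (2 - Suc 0)))) / 2 = v \<bullet> (diag_mat m *v u)"
  by (simp add: diag_mult inner_vec_def sum_divide_distrib algebra_simps)
lemma ex_alg: "(\<Sum>i\<in>UNIV. of_nat 2 * ((u$i - 0) * (v$i - w$i) ^ (2 - Suc 0))) / 2 = (v - w) \<bullet> u"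
  by (simp add: inner_vec_def sum_divide_distrib algebra_simps) (rule sum.cong; simp add: field_simps)
lemma dr_alg: "(\<Sum>e\<in>UNIV. gamma$e * (0 - (- sin (x$e) * u$e) - sin (y$e) * (u$e - 0))) = (Gv x - Gv y) \<bullet> u"
  by (simp add: Gv_def inner_vec_def algebra_simps)

abbreviation "etad t \<equiv> transpose (B_S (rows_G B) (rows_L B) gamma (eta t)) *v omega t"
abbreviation "xid t \<equiv> - (LC *v xi t) - diag_mat qi *v omega t"

lemma dxi': "0 \<le> t \<Longrightarrow> (xi has_vector_derivative xid t) (at t within {0..})"
  using dxi by (simp add: qi_def)
lemma Weq': "0 \<le> t \<Longrightarrow> diag_mat mm *v W t = - (diag_mat a *v omega t) - rows_G B *v Gv (eta t) + diag_mat qi *v xi t"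
  using Weq by (simp add: qi_def Bgsin)

lemma dsin: "0 \<le> x \<Longrightarrow> ((\<lambda>s. sin (eta s $ e)) has_real_derivative cos (eta x $ e) * etad x $ e) (at x within {0..})"
proof -
  assume x0: "0 \<le> x"
  have "((\<lambda>s. eta s $ e) has_real_derivative etad x $ e) (at x within {0..})" by (rule comp_deriv[OF deta[OF x0]])
  from DERIV_chain2[OF DERIV_sin this] show ?thesis by simp
qed

lemma dcos: "0 \<le> x \<Longrightarrow> ((\<lambda>s. cos (eta s $ e)) has_real_derivative - sin (eta x $ e) * etad x $ e) (at x within {0..})"
proof -
  assume x0: "0 \<le> x"
  have "((\<lambda>s. eta s $ e) has_real_derivative etad x $ e) (at x within {0..})" by (rule comp_deriv[OF deta[OF x0]])
  from DERIV_chain2[OF DERIV_cos this] show ?thesis by simp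
qed

lemma inv_interval:
  assumes T: "0 \<le> T" and reg: "\<forall>s\<in>{0..T}. eta s \<in> cball etabar rr" and s: "s \<in> {0..T}"
  shows "rows_L B *v Gv (eta s) = rows_L B *v Gv etabar"
proof (subst vec_eq_iff, intro allI)
  fix j
  define \<phi> where "\<phi> = (\<lambda>s. (\<Sum>e\<in>UNIV. rows_L B $ j $ e * (gamma$e * sin (eta s $ e))))"
  have phi_eq: "\<phi> s = (rows_L B *v Gv (eta s))$j" for s
    by (simp add: \<phi>_def Gv_def matrix_vector_mult_def)
  have "\<exists>c. \<forall>x\<in>{0..T}. \<phi> x = c"
  proof (rule has_field_derivative_zero_constant)
    fix x assume x: "x \<in> {0..T}"
    hence x0: "0 \<le> x" by auto
    have "(\<phi> has_field_derivative (\<Sum>e\<in>UNIV. rows_L B $ j $ e * (gamma$e * (cos (eta x $ e) * etad x $ e)))) (at x within {0..})"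
      unfolding \<phi>_def
      by (intro DERIV_sum DERIV_cmult dsin[OF x0])
    moreover have "(\<Sum>e\<in>UNIV. rows_L B $ j $ e * (gamma$e * (cos (eta x $ e) * etad x $ e)))
         = (rows_L B *v (Gamma' gamma (eta x) *v etad x))$j"
      by (simp add: matrix_vector_mult_def[of "rows_L B"] Gamma'_eq diag_mult algebra_simps)
    moreover have "rows_L B *v (Gamma' gamma (eta x) *v etad x) = 0"
      by (rule kill) (use reg x in auto)
    ultimately have "(\<phi> has_field_derivative 0) (at x within {0..})" by simp
    thus "(\<phi> has_field_derivative 0) (at x within {0..T})" by (rule DERIV_subset) auto
  qed auto
  hence "\<phi> s = \<phi> 0" using s T by fastforce
  moreover have "\<phi> 0 = (rows_L B *v Gv etabar)$j" using inv0 by (simp add: phi_eq vsin_Gv)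
  ultimately show "(rows_L B *v Gv (eta s))$j = (rows_L B *v Gv etabar)$j" by (simp add: phi_eq)
qed

definition "Vt t = Kin (omega t) + Dr (eta t) + Exi (xi t)"

lemma dV:
  assumes t: "0 \<le> t" and inv: "rows_L B *v Gv (eta t) = rows_L B *v Gv etabar"
  shows "(Vt has_real_derivative - gf (omega t) (xi t)) (at t within {0..})"
proof -
  have dK: "((\<lambda>s. Kin (omega s)) has_real_derivative omega t \<bullet> (diag_mat mm *v W t)) (at t within {0..})"
  proof -
    have "((\<lambda>s. Kin (omega s)) has_real_derivative (\<Sum>i\<in>UNIV. mm$i * (of_nat 2 * (W t $ i * omega t $ i ^ (2 - Suc 0)))) / 2) (at t within {0..})"
      unfolding Kin_def
      by (intro DERIV_cdivide DERIV_sum DERIV_cmult DERIV_power comp_deriv[OF domega[OF t]])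
    thus ?thesis by (simp only: kin_alg)
  qed
  have dD: "((\<lambda>s. Dr (eta s)) has_real_derivative (Gv (eta t) - Gv etabar) \<bullet> etad t) (at t within {0..})"
  proof -
    have "((\<lambda>s. Dr (eta s)) has_real_derivative (\<Sum>e\<in>UNIV. gamma$e * (0 - (- sin (eta t $ e) * etad t $ e) - sin (etabar$e) * (etad t $ e - 0)))) (at t within {0..})"
      unfolding Dr_def
      by (intro DERIV_sum DERIV_cmult DERIV_diff DERIV_const dcos[OF t] comp_deriv[OF deta[OF t]])
    thus ?thesis by (simp only: dr_alg)
  qed
  have dE: "((\<lambda>s. Exi (xi s)) has_real_derivative (xi t - xib) \<bullet> xid t) (at t within {0..})"
  proof -
    have "((\<lambda>s. Exi (xi s)) has_real_derivative (\<Sum>i\<in>UNIV. of_nat 2 * ((xid t $ i - 0) * (xi t $ i - xib $ i) ^ (2 - Suc 0))) / 2) (at t within {0..})"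
      unfolding Exi_def
      by (intro DERIV_cdivide DERIV_sum DERIV_power DERIV_diff DERIV_const comp_deriv[OF dxi'[OF t]])
    thus ?thesis by (simp only: ex_alg)
  qed
  have "(Vt has_real_derivative omega t \<bullet> (diag_mat mm *v W t) + (Gv (eta t) - Gv etabar) \<bullet> etad t + (xi t - xib) \<bullet> xid t) (at t within {0..})"
    unfolding Vt_def by (intro DERIV_add dK dD dE)
  moreover have "omega t \<bullet> (diag_mat mm *v W t) + (Gv (eta t) - Gv etabar) \<bullet> etad t + (xi t - xib) \<bullet> xid t = - gf (omega t) (xi t)"
    unfolding BSt_dec by (rule Vdot_alg[OF Weq'[OF t] inv zext_Inl])
  ultimately show ?thesis by simp
qed

end


context sol begin

lemma eta_cont: "continuous_on {0..} eta"
  unfolding continuous_on_eq_continuous_within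
  using deta by (auto intro: has_vector_derivative_continuous)

lemma V_mono_interval:
  assumes T: "0 \<le> T" and reg: "\<forall>s\<in>{0..T}. eta s \<in> cball etabar rr"
  shows "Vt T \<le> Vt 0"
proof -
  have "\<exists>x\<in>{0..T}. Vt T - Vt 0 = (*) (- gf (omega x) (xi x)) (T - 0)"
  proof (rule mvt_very_simple[OF T])
    fix x assume x: "0 \<le> x" "x \<le> T"
    have "(Vt has_real_derivative - gf (omega x) (xi x)) (at x within {0..})"
      by (rule dV) (use x inv_interval[OF T reg] in auto)
    hence "(Vt has_real_derivative - gf (omega x) (xi x)) (at x within {0..T})"
      by (rule DERIV_subset) auto
    thus "(Vt has_derivative (*) (- gf (omega x) (xi x))) (at x within {0..T})"
      by (simp add: has_field_derivative_def)
  qed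
  then obtain x where "Vt T - Vt 0 = - gf (omega x) (xi x) * T" by auto
  moreover have "0 \<le> gf (omega x) (xi x) * T" using gf_nonneg T by simp
  ultimately show ?thesis by linarith
qed

lemma Vt_lower: "eta t \<in> cball etabar rr \<Longrightarrow> gmin * kap / 2 * (dist (eta t) etabar)^2 \<le> Vt t"
  using Dr_lower[of "eta t"] Kin_nonneg[of "omega t"] Exi_nonneg[of "xi t"] unfolding Vt_def by linarith

lemma stay:
  assumes V0: "Vt 0 < gmin * kap / 2 * rr^2" and e0: "eta 0 \<in> ball etabar rr" and t: "0 \<le> t"
  shows "eta t \<in> ball etabar rr"
proof (rule ccontr)
  assume nt: "eta t \<notin> ball etabar rr"
  define S where "S = {s. 0 \<le> s \<and> eta s \<notin> ball etabar rr}"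
  have S_eq: "S = {0..} \<inter> eta -` (- ball etabar rr)" by (auto simp: S_def)
  have clS: "closed S" unfolding S_eq
    by (rule continuous_closed_preimage[OF eta_cont]) auto
  have neS: "S \<noteq> {}" using nt t by (auto simp: S_def)
  have bdd: "bdd_below S" by (auto simp: S_def bdd_below_def)
  define t0 where "t0 = Inf S"
  have t0S: "t0 \<in> S" unfolding t0_def by (rule closed_contains_Inf[OF neS bdd clS])
  hence t00: "0 \<le> t0" and nb: "eta t0 \<notin> ball etabar rr" by (auto simp: S_def)
  have before: "eta s \<in> ball etabar rr" if "0 \<le> s" "s < t0" for s
  proof (rule ccontr)
    assume "eta s \<notin> ball etabar rr"
    hence "s \<in> S" using that by (auto simp: S_def)
    hence "t0 \<le> s" unfolding t0_def using bdd by (rule cInf_lower)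
    thus False using that by simp
  qed
  have t0pos: "0 < t0" using t00 nb e0 by (cases "t0 = 0") auto
  have cb: "dist etabar (eta t0) \<le> rr"
  proof (rule ccontr)
    assume "\<not> dist etabar (eta t0) \<le> rr"
    hence d0: "dist etabar (eta t0) - rr > 0" by simp
    have "continuous (at t0 within {0..}) eta" using deta[OF t00] by (rule has_vector_derivative_continuous)
    then obtain d where d: "d > 0" "\<forall>x'\<in>{0..}. dist x' t0 < d \<longrightarrow> dist (eta x') (eta t0) < dist etabar (eta t0) - rr"
      unfolding continuous_within_eps_delta using d0 by blast
    define s where "s = max 0 (t0 - d/2)"
    have s: "0 \<le> s" "s < t0" "dist s t0 < d" using d t0pos by (auto simp: s_def dist_real_def)
    hence "dist (eta s) (eta t0) < dist etabar (eta t0) - rr" using d by auto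
    moreover have "dist etabar (eta s) < rr" using before[OF s(1,2)] by simp
    moreover have "dist etabar (eta t0) \<le> dist etabar (eta s) + dist (eta s) (eta t0)" by (rule dist_triangle)
    ultimately show False by linarith
  qed
  have reg: "\<forall>s\<in>{0..t0}. eta s \<in> cball etabar rr"
  proof
    fix s assume "s \<in> {0..t0}"
    thus "eta s \<in> cball etabar rr" using before[of s] cb by (cases "s = t0") auto
  qed
  have "Vt t0 \<le> Vt 0" by (rule V_mono_interval[OF t00 reg])
  moreover have "gmin * kap / 2 * (dist (eta t0) etabar)^2 \<le> Vt t0" using reg t00 by (intro Vt_lower) auto
  moreover have "rr^2 \<le> (dist (eta t0) etabar)^2" using nb rr_pos by (intro power_mono) (auto simp: dist_commute)
  hence "gmin * kap / 2 * rr^2 \<le> gmin * kap / 2 * (dist (eta t0) etabar)^2"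
    using gmin_pos kap_pos by (intro mult_left_mono) auto
  ultimately show False using V0 by linarith
qed

end


context plant begin

lemma perp_range:
  assumes y: "\<forall>z. B *v z = 0 \<longrightarrow> z \<bullet> y = 0"
  shows "y \<in> range (\<lambda>th. transpose B *v th)"
proof -
  have lin: "linear (\<lambda>x. B *v x)" by simp
  have ker: "(\<lambda>x. B *v x) -` {0} = (range (\<lambda>x. transpose B *v x))\<^sup>\<bottom>"
    using ker_orthogonal_comp_adjoint[OF lin] by (simp add: adjoint_matrix)
  have sub: "subspace (range (\<lambda>x. transpose B *v x))"
    by (rule linear_subspace_image) (simp_all add: subspace_UNIV)
  have "y \<in> ((\<lambda>x. B *v x) -` {0})\<^sup>\<bottom>"
    using y by (auto simp: orthogonal_comp_def orthogonal_def)
  thus ?thesis unfolding ker orthogonal_comp_self[OF sub] .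
qed

lemma rinv: "\<exists>C>0. \<forall>v\<in>range (\<lambda>th. transpose B *v th). \<exists>th. transpose B *v th = v \<and> norm th \<le> C * norm v"
proof -
  have lin: "linear (\<lambda>x. transpose B *v x)" by simp
  obtain g where g: "linear g" "\<forall>v\<in>(\<lambda>x. transpose B *v x) ` UNIV. transpose B *v g v = v"
    using linear_exists_right_inverse_on[OF lin subspace_UNIV] by blast
  obtain C where C: "C > 0" "\<And>x. norm (g x) \<le> C * norm x" using linear_bounded_pos[OF g(1)] by blast
  show ?thesis using g(2) C by (intro exI[of _ C]) auto
qed

definition "mmin = Min (range (\<lambda>i. mm$i))"
definition "amin = Min (range (\<lambda>i. a$i))"
lemma mmin_le: "mmin \<le> mm$i" unfolding mmin_def by (rule Min_le) auto
lemma mmin_pos: "mmin > 0"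
proof -
  have "mmin \<in> range (\<lambda>i. mm$i)" unfolding mmin_def by (rule Min_in) auto
  thus ?thesis using M_pos by auto
qed
lemma amin_le: "amin \<le> a$i" unfolding amin_def by (rule Min_le) auto
lemma amin_pos: "amin > 0"
proof -
  have "amin \<in> range (\<lambda>i. a$i)" unfolding amin_def by (rule Min_in) auto
  thus ?thesis using A_pos by auto
qed

lemma Kin_lower: "mmin / 2 * (norm w)^2 \<le> Kin w"
proof -
  have "(\<Sum>i\<in>UNIV. mmin * (w$i)^2) = mmin * (norm w)^2" by (simp add: norm_sq_sum sum_distrib_left)
  hence "mmin / 2 * (norm w)^2 = (\<Sum>i\<in>UNIV. mmin * (w$i)^2) / 2" by simp
  also have "\<dots> \<le> (\<Sum>i\<in>UNIV. mm$i * (w$i)^2) / 2"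
    using mmin_le by (intro divide_right_mono sum_mono mult_right_mono) auto
  finally show ?thesis by (simp add: Kin_def)
qed

lemma Exi_eq: "Exi x = (norm (x - xib))^2 / 2"
  by (simp add: Exi_def norm_sq_sum)

lemma gf_lower: "amin * (norm w)^2 \<le> gf w x"
proof -
  have "amin * (norm w)^2 = (\<Sum>i\<in>UNIV. amin * (w$i)^2)" by (simp add: norm_sq_sum sum_distrib_left)
  also have "\<dots> \<le> (\<Sum>i\<in>UNIV. a$i * (w$i)^2)" using amin_le by (intro sum_mono mult_right_mono) auto
  finally show ?thesis unfolding gf_def using LC_nonneg[of x] by linarith
qed

lemma gf_LC: "x \<bullet> (LC *v x) \<le> gf w x"
proof -
  have "0 \<le> (\<Sum>i\<in>UNIV. a$i * (w$i)^2)" using A_pos by (auto intro!: sum_nonneg mult_nonneg_nonneg simp: less_imp_le)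
  thus ?thesis unfolding gf_def by linarith
qed

end

locale gsol = sol +
  assumes V0: "Vt 0 < gmin * kap / 2 * rr^2" and e0: "eta 0 \<in> ball etabar rr"
begin

lemma inball: "0 \<le> t \<Longrightarrow> eta t \<in> ball etabar rr" by (rule stay[OF V0 e0])
lemma incb: "0 \<le> t \<Longrightarrow> eta t \<in> cball etabar rr"
proof -
  assume t: "0 \<le> t"
  from inball[OF t] show ?thesis by simp
qed
lemma inv: "0 \<le> t \<Longrightarrow> rows_L B *v Gv (eta t) = rows_L B *v Gv etabar"
proof -
  assume t: "0 \<le> t"
  have "\<forall>s\<in>{0..t}. eta s \<in> cball etabar rr" using incb by auto
  from inv_interval[OF t this] t show ?thesis by auto
qed
lemma dV': "0 \<le> t \<Longrightarrow> (Vt has_real_derivative - gf (omega t) (xi t)) (at t within {0..})"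
  by (rule dV) (auto intro: inv)
lemma Vmono: "0 \<le> s \<Longrightarrow> s \<le> t \<Longrightarrow> Vt t \<le> Vt s"
proof -
  assume st: "0 \<le> s" "s \<le> t"
  obtain x where "x \<in> {s..t}" "Vt t - Vt s = - gf (omega x) (xi x) * (t - s)"
    using mvt0[of s t Vt "\<lambda>x. - gf (omega x) (xi x)", OF st dV'] by auto
  moreover have "0 \<le> gf (omega x) (xi x) * (t - s)" using gf_nonneg st by simp
  ultimately show ?thesis by linarith
qed
lemma Vnn: "0 \<le> t \<Longrightarrow> 0 \<le> Vt t"
  using Kin_nonneg Exi_nonneg Dr_nonneg[OF incb] unfolding Vt_def by (smt (verit))

lemma omega_bound: "0 \<le> t \<Longrightarrow> norm (omega t) \<le> sqrt (2 * Vt 0 / mmin)"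
proof -
  assume t: "0 \<le> t"
  have "mmin / 2 * (norm (omega t))^2 \<le> Vt 0"
    using Kin_lower[of "omega t"] Vmono[OF _ t] Exi_nonneg Dr_nonneg[OF incb[OF t]] unfolding Vt_def by (smt (verit))
  hence "(norm (omega t))^2 \<le> 2 * Vt 0 / mmin" using mmin_pos by (simp add: field_simps)
  thus ?thesis by (simp add: real_le_rsqrt)
qed

lemma xi_bound: "0 \<le> t \<Longrightarrow> norm (xi t - xib) \<le> sqrt (2 * Vt 0)"
proof -
  assume t: "0 \<le> t"
  have "(norm (xi t - xib))^2 / 2 \<le> Vt 0"
    using Exi_eq[of "xi t"] Vmono[OF _ t] Kin_nonneg Dr_nonneg[OF incb[OF t]] unfolding Vt_def by (smt (verit))
  thus ?thesis by (simp add: real_le_rsqrt)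
qed

end



lemma dist_pair_le: "dist (a, b) (c, d) \<le> dist a c + dist b d"
  unfolding dist_Pair_Pair by (rule sqrt_sum_squares_le_sum) auto

lemma cont_bounded:
  fixes F :: "'a::metric_space \<Rightarrow> 'b::real_normed_vector"
  assumes "compact C" "continuous_on C F"
  shows "\<exists>K. \<forall>x\<in>C. norm (F x) \<le> K"
proof -
  have "compact (F ` C)" by (rule compact_continuous_image[OF assms(2,1)])
  hence "bounded (F ` C)" by (rule compact_imp_bounded)
  then obtain b where "\<forall>y\<in>F ` C. norm y \<le> b" unfolding bounded_pos by blast
  thus ?thesis by auto
qed

context plant begin
lemma mm_nz: "mm$i \<noteq> 0" using M_pos by (metis less_irrefl)
end

context gsol begin

definition "Kw = sqrt (2 * Vt 0 / mmin)"
definition "Kx = sqrt (2 * Vt 0)"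
definition "C2 = cball (0::real^'g) Kw \<times> cball xib Kx"
definition "C3 = cball etabar rr \<times> C2"
definition "z2 t = (omega t, xi t)"
definition "z3 t = (eta t, z2 t)"

lemma compC2: "compact C2" unfolding C2_def by (intro compact_Times compact_cball)
lemma compC3: "compact C3" unfolding C3_def by (intro compact_Times compact_cball compC2)
lemma z2_in: "0 \<le> t \<Longrightarrow> z2 t \<in> C2"
  using omega_bound xi_bound unfolding C2_def z2_def Kw_def Kx_def by (auto simp: dist_norm norm_minus_commute)
lemma z3_in: "0 \<le> t \<Longrightarrow> z3 t \<in> C3"
  using incb z2_in unfolding C3_def z3_def by auto

definition "FW p = (\<chi> i. (- (a$i * (fst (snd p))$i) - (rows_G B *v Gv (fst p))$i + qi$i * (snd (snd p))$i) / mm$i)"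

lemma W_eq: "0 \<le> t \<Longrightarrow> W t = FW (z3 t)"
proof -
  assume t: "0 \<le> t"
  have "(diag_mat mm *v W t)$i = (- (diag_mat a *v omega t) - rows_G B *v Gv (eta t) + diag_mat qi *v xi t)$i" for i
    using Weq'[OF t] by simp
  hence h: "mm$i * W t $ i = - (a$i * omega t $ i) - (rows_G B *v Gv (eta t))$i + qi$i * xi t $ i" for i
    by (simp add: diag_mult)
  have "W t $ i = (- (a$i * omega t $ i) - (rows_G B *v Gv (eta t))$i + qi$i * xi t $ i) / mm$i" for i
    using h[of i] mm_nz[of i] by (simp add: eq_divide_eq mult.commute)
  thus ?thesis unfolding FW_def z3_def z2_def by (simp add: vec_eq_iff)
qed

lemma Gv_cont: fixes S :: "'z::t2_space set" assumes "continuous_on S f" shows "continuous_on S (\<lambda>p. Gv (f p))"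
  unfolding Gv_def by (intro continuous_on_vec_lambda continuous_on_mult continuous_on_const continuous_on_sin continuous_on_component assms)

lemma FW_cont: "continuous_on S FW"
  unfolding FW_def
  by (intro continuous_intros bounded_linear.continuous_on[OF matrix_vector_mul_bounded_linear]
        Gv_cont continuous_on_fst continuous_on_snd continuous_on_id) (simp add: mm_nz)

definition "FX p = - (LC *v snd p) - diag_mat qi *v fst p"
lemma FX_cont: "continuous_on S FX"
  unfolding FX_def
  by (intro continuous_intros bounded_linear.continuous_on[OF matrix_vector_mul_bounded_linear])

definition "FG p = gf (fst p) (snd p)"
lemma FG_cont: "continuous_on S FG"
  unfolding FG_def gf_def
  by (intro continuous_intros bounded_linear.continuous_on[OF matrix_vector_mul_bounded_linear])

lemma W_bound: "\<exists>K. \<forall>t\<ge>0. norm (W t) \<le> K"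
proof -
  obtain K where K: "\<forall>x\<in>C3. norm (FW x) \<le> K" using cont_bounded[OF compC3 FW_cont] by blast
  thus ?thesis using W_eq z3_in by (intro exI[of _ K]) auto
qed

lemma xid_bound: "\<exists>K. \<forall>t\<ge>0. norm (xid t) \<le> K"
proof -
  obtain K where K: "\<forall>x\<in>C2. norm (FX x) \<le> K" using cont_bounded[OF compC2 FX_cont] by blast
  have "xid t = FX (z2 t)" for t by (simp add: FX_def z2_def)
  thus ?thesis using K z2_in by (intro exI[of _ K]) auto
qed

lemma etad_bound: "\<exists>K. \<forall>t\<ge>0. norm (etad t) \<le> K"
proof -
  obtain K where K: "\<forall>eta\<in>cball etabar rr. \<forall>w. norm (transpose (B_S (rows_G B) (rows_L B) gamma eta) *v w) \<le> K * norm w"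
    using BSt_bound by blast
  have "norm (etad t) \<le> \<bar>K\<bar> * Kw" if t: "0 \<le> t" for t
  proof -
    have "norm (etad t) \<le> K * norm (omega t)" using K incb[OF t] by blast
    also have "\<dots> \<le> \<bar>K\<bar> * norm (omega t)" by (simp add: mult_right_mono)
    also have "\<dots> \<le> \<bar>K\<bar> * Kw" using omega_bound[OF t] by (intro mult_left_mono) (auto simp: Kw_def)
    finally show ?thesis .
  qed
  thus ?thesis by blast
qed

lemma z3_lip: "\<exists>K. \<forall>s t. 0 \<le> s \<longrightarrow> s \<le> t \<longrightarrow> dist (z3 t) (z3 s) \<le> K * (t - s)"
proof -
  obtain K1 where K1: "\<forall>t\<ge>0. norm (etad t) \<le> K1" using etad_bound by blast
  obtain K2 where K2: "\<forall>t\<ge>0. norm (W t) \<le> K2" using W_bound by blast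
  obtain K3 where K3: "\<forall>t\<ge>0. norm (xid t) \<le> K3" using xid_bound by blast
  show ?thesis
  proof (intro exI[of _ "K1 + K2 + K3"] allI impI)
    fix s t :: real assume st: "0 \<le> s" "s \<le> t"
    have 1: "norm (eta t - eta s) \<le> K1 * (t - s)" by (rule vd_bound0[OF st deta]) (use K1 in auto)
    have 2: "norm (omega t - omega s) \<le> K2 * (t - s)" by (rule vd_bound0[OF st domega]) (use K2 in auto)
    have 3: "norm (xi t - xi s) \<le> K3 * (t - s)" by (rule vd_bound0[OF st dxi']) (use K3 in auto)
    have "dist (z3 t) (z3 s) \<le> dist (eta t) (eta s) + (dist (omega t) (omega s) + dist (xi t) (xi s))"
      unfolding z3_def z2_def using dist_pair_le[of "eta t" "(omega t, xi t)"] dist_pair_le[of "omega t" "xi t"]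
      by (smt (verit))
    also have "\<dots> \<le> K1 * (t - s) + (K2 * (t - s) + K3 * (t - s))" using 1 2 3 by (simp add: dist_norm)
    finally show "dist (z3 t) (z3 s) \<le> (K1 + K2 + K3) * (t - s)" by (simp add: algebra_simps)
  qed
qed

lemma z2_lip: "\<exists>K. \<forall>s t. 0 \<le> s \<longrightarrow> s \<le> t \<longrightarrow> dist (z2 t) (z2 s) \<le> K * (t - s)"
proof -
  obtain K where K: "\<forall>s t. 0 \<le> s \<longrightarrow> s \<le> t \<longrightarrow> dist (z3 t) (z3 s) \<le> K * (t - s)" using z3_lip by blast
  have "dist (z2 t) (z2 s) \<le> dist (z3 t) (z3 s)" for s t
    unfolding z3_def dist_Pair_Pair by (simp add: real_le_rsqrt)
  thus ?thesis using K by (intro exI[of _ K]) (smt (verit))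
qed

lemma g_lim: "((\<lambda>t. gf (omega t) (xi t)) \<longlongrightarrow> 0) at_top"
proof (rule barbalat1[of Vt])
  show "\<And>t. 0 \<le> t \<Longrightarrow> (Vt has_real_derivative - gf (omega t) (xi t)) (at t within {0..})" by (rule dV')
  show "\<And>t. 0 \<le> t \<Longrightarrow> 0 \<le> Vt t" by (rule Vnn)
  show "\<And>t. 0 \<le> t \<Longrightarrow> 0 \<le> gf (omega t) (xi t)" by (rule gf_nonneg)
  fix e :: real assume e: "e > 0"
  obtain K where K: "\<forall>s t. 0 \<le> s \<longrightarrow> s \<le> t \<longrightarrow> dist (z2 t) (z2 s) \<le> K * (t - s)" using z2_lip by blast
  have "\<exists>d>0. \<forall>s\<ge>0. \<forall>t\<ge>0. \<bar>s - t\<bar> < d \<longrightarrow> dist (FG (z2 s)) (FG (z2 t)) < e"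
    by (rule uc_comp[OF compC2 FG_cont z2_in]) (use K e in auto)
  thus "\<exists>d>0. \<forall>s\<ge>0. \<forall>t\<ge>0. \<bar>s - t\<bar> < d \<longrightarrow> dist (gf (omega s) (xi s)) (gf (omega t) (xi t)) < e"
    by (simp add: FG_def z2_def)
qed

lemma omega_lim: "(omega \<longlongrightarrow> 0) at_top"
proof (rule Lim_null_comparison)
  show "((\<lambda>t. sqrt (gf (omega t) (xi t) / amin)) \<longlongrightarrow> 0) at_top"
    using tendsto_real_sqrt[OF tendsto_divide[OF g_lim tendsto_const, of amin]] amin_pos by simp
  show "eventually (\<lambda>t. norm (omega t) \<le> sqrt (gf (omega t) (xi t) / amin)) at_top"
  proof (rule always_eventually, rule allI)
    fix t
    have "(norm (omega t))^2 \<le> gf (omega t) (xi t) / amin"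
      using gf_lower[of "omega t" "xi t"] amin_pos by (simp add: field_simps)
    thus "norm (omega t) \<le> sqrt (gf (omega t) (xi t) / amin)" by (simp add: real_le_rsqrt)
  qed
qed

end



lemma sum_split_plus: "(\<Sum>n\<in>(UNIV::('a::finite+'b::finite) set). f n) = (\<Sum>i\<in>UNIV. f (Inl i)) + (\<Sum>j\<in>UNIV. f (Inr j))"
  by (subst UNIV_Plus_UNIV[symmetric], subst sum.Plus) auto

context gsol begin

lemma ev0: "eventually (\<lambda>t. (0::real) \<le> t) at_top" by (rule eventually_ge_at_top)

lemma xi_edge_lim:
  assumes w: "0 < WW$x$y"
  shows "((\<lambda>t. xi t $ x - xi t $ y) \<longlongrightarrow> 0) at_top"
proof (rule Lim_null_comparison)
  show "((\<lambda>t. sqrt (2 * gf (omega t) (xi t) / WW$x$y)) \<longlongrightarrow> 0) at_top"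
    using tendsto_real_sqrt[OF tendsto_divide[OF tendsto_mult[OF tendsto_const g_lim] tendsto_const, of "WW$x$y"]] w
    by simp
  show "eventually (\<lambda>t. norm (xi t $ x - xi t $ y) \<le> sqrt (2 * gf (omega t) (xi t) / WW$x$y)) at_top"
  proof (rule always_eventually, rule allI)
    fix t
    have "WW$x$y * (xi t $ x - xi t $ y)^2 \<le> 2 * gf (omega t) (xi t)"
      using LC_edge[of x y "xi t"] gf_LC[of "xi t" "omega t"] by linarith
    hence "(xi t $ x - xi t $ y)^2 \<le> 2 * gf (omega t) (xi t) / WW$x$y" using w by (simp add: field_simps)
    thus "norm (xi t $ x - xi t $ y) \<le> sqrt (2 * gf (omega t) (xi t) / WW$x$y)"
      by (simp add: real_le_rsqrt)
  qed
qed

lemma xi_diff_lim: "((\<lambda>t. xi t $ x - xi t $ y) \<longlongrightarrow> 0) at_top"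
proof -
  have "(x, y) \<in> {(i, j). 0 < WW$i$j}\<^sup>*" using WW by blast
  thus ?thesis
  proof (induction rule: rtrancl_induct)
    case base thus ?case by simp
  next
    case (step y z)
    have "((\<lambda>t. (xi t $ x - xi t $ y) + (xi t $ y - xi t $ z)) \<longlongrightarrow> 0 + 0) at_top"
      using step.IH xi_edge_lim[of y z] step.hyps(2) by (intro tendsto_add) auto
    thus ?case by simp
  qed
qed

lemma W_lim: "(W \<longlongrightarrow> 0) at_top"
proof (rule barbalat2[OF domega omega_lim])
  fix e :: real assume e: "e > 0"
  obtain K where K: "\<forall>s t. 0 \<le> s \<longrightarrow> s \<le> t \<longrightarrow> dist (z3 t) (z3 s) \<le> K * (t - s)" using z3_lip by blast
  have "\<exists>d>0. \<forall>s\<ge>0. \<forall>t\<ge>0. \<bar>s - t\<bar> < d \<longrightarrow> dist (FW (z3 s)) (FW (z3 t)) < e"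
    by (rule uc_comp[OF compC3 FW_cont z3_in]) (use K e in auto)
  thus "\<exists>d>0. \<forall>s\<ge>0. \<forall>t\<ge>0. \<bar>s - t\<bar> < d \<longrightarrow> dist (W s) (W t) < e"
    using W_eq by auto
qed

lemma h_lim: "((\<lambda>t. qi$i * xi t $ i - (rows_G B *v Gv (eta t))$i) \<longlongrightarrow> 0) at_top"
proof -
  have "((\<lambda>t. mm$i * W t $ i + a$i * omega t $ i) \<longlongrightarrow> mm$i * 0$i + a$i * 0$i) at_top"
    by (intro tendsto_intros W_lim omega_lim)
  moreover have "eventually (\<lambda>t. mm$i * W t $ i + a$i * omega t $ i = qi$i * xi t $ i - (rows_G B *v Gv (eta t))$i) at_top"
  proof (rule eventually_mono[OF ev0])
    fix t :: real assume t: "0 \<le> t"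
    have "(diag_mat mm *v W t)$i = (- (diag_mat a *v omega t) - rows_G B *v Gv (eta t) + diag_mat qi *v xi t)$i"
      using Weq'[OF t] by simp
    thus "mm$i * W t $ i + a$i * omega t $ i = qi$i * xi t $ i - (rows_G B *v Gv (eta t))$i"
      by (simp add: diag_mult)
  qed
  ultimately show ?thesis by (simp add: Lim_transform_eventually)
qed

lemma sumG: "(\<Sum>i\<in>UNIV. (rows_G B *v x)$i) = - (\<Sum>j\<in>UNIV. (rows_L B *v x)$j)"
  using sum_Bv_zero[OF B_inc, of x] by (simp add: sum_split_plus B_Inl B_Inr)

lemma sum_Bg: "0 \<le> t \<Longrightarrow> (\<Sum>i\<in>UNIV. (rows_G B *v Gv (eta t))$i) = - lam * (\<Sum>i\<in>UNIV. qi$i)"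
proof -
  assume t: "0 \<le> t"
  have "(\<Sum>i\<in>UNIV. (rows_G B *v Gv (eta t))$i) = (\<Sum>i\<in>UNIV. (rows_G B *v Gv etabar)$i)"
    unfolding sumG using inv[OF t] by simp
  also have "\<dots> = - lam * (\<Sum>i\<in>UNIV. qi$i)" by (simp add: etabar_eq' sum_distrib_left sum_negf)
  finally show ?thesis .
qed

lemma sq_pos: "(\<Sum>i\<in>UNIV. qi$i) > 0"
  using q_pos by (simp add: qi_def sum_pos)

lemma xi_comp_lim: "((\<lambda>t. xi t $ i0) \<longlongrightarrow> - lam) at_top"
proof -
  define sq where "sq = (\<Sum>i\<in>UNIV. qi$i)"
  have sq: "sq > 0" using sq_pos by (simp add: sq_def)
  have R: "((\<lambda>t. (\<Sum>i\<in>UNIV. qi$i * xi t $ i - (rows_G B *v Gv (eta t))$i) - (\<Sum>i\<in>UNIV. qi$i * (xi t $ i - xi t $ i0))) \<longlongrightarrow> 0 - 0) at_top"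
    using h_lim xi_diff_lim
    by (intro tendsto_diff tendsto_null_sum tendsto_mult_right_zero) auto
  have ev: "eventually (\<lambda>t. (\<Sum>i\<in>UNIV. qi$i * xi t $ i - (rows_G B *v Gv (eta t))$i) - (\<Sum>i\<in>UNIV. qi$i * (xi t $ i - xi t $ i0)) = (xi t $ i0 + lam) * sq) at_top"
  proof (rule eventually_mono[OF ev0])
    fix t :: real assume t: "0 \<le> t"
    have "(\<Sum>i\<in>UNIV. qi$i * xi t $ i - (rows_G B *v Gv (eta t))$i) = (\<Sum>i\<in>UNIV. qi$i * xi t $ i) + lam * sq"
      using sum_Bg[OF t] by (simp add: sum_subtractf sq_def)
    moreover have "(\<Sum>i\<in>UNIV. qi$i * (xi t $ i - xi t $ i0)) = (\<Sum>i\<in>UNIV. qi$i * xi t $ i) - xi t $ i0 * sq"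
      by (simp add: algebra_simps sum_subtractf sum_distrib_left sq_def)
    ultimately show "(\<Sum>i\<in>UNIV. qi$i * xi t $ i - (rows_G B *v Gv (eta t))$i) - (\<Sum>i\<in>UNIV. qi$i * (xi t $ i - xi t $ i0)) = (xi t $ i0 + lam) * sq"
      by (simp add: algebra_simps)
  qed
  have "((\<lambda>t. (xi t $ i0 + lam) * sq) \<longlongrightarrow> 0) at_top"
    using Lim_transform_eventually[OF R ev] by simp
  hence "((\<lambda>t. (xi t $ i0 + lam) * sq / sq) \<longlongrightarrow> 0 / sq) at_top"
    by (intro tendsto_divide tendsto_const) (use sq in auto)
  hence "((\<lambda>t. xi t $ i0 + lam) \<longlongrightarrow> 0) at_top" using sq by simp
  hence "((\<lambda>t. (xi t $ i0 + lam) - lam) \<longlongrightarrow> 0 - lam) at_top" by (intro tendsto_diff tendsto_const)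
  thus ?thesis by simp
qed

lemma xi_lim: "(xi \<longlongrightarrow> xib) at_top"
  by (rule vec_tendstoI) (simp add: xib_def xi_comp_lim)

lemma BGv_lim: "((\<lambda>t. B *v (Gv (eta t) - Gv etabar)) \<longlongrightarrow> 0) at_top"
proof (rule vec_tendstoI)
  fix n
  show "((\<lambda>t. (B *v (Gv (eta t) - Gv etabar)) $ n) \<longlongrightarrow> 0 $ n) at_top"
  proof (cases n)
    case (Inl i)
    have "((\<lambda>t. qi$i * xi t $ i - (qi$i * xi t $ i - (rows_G B *v Gv (eta t))$i) - (rows_G B *v Gv etabar)$i)
           \<longlongrightarrow> qi$i * (- lam) - 0 - (rows_G B *v Gv etabar)$i) at_top"
      by (intro tendsto_intros xi_comp_lim h_lim)
    moreover have "qi$i * (- lam) - 0 - (rows_G B *v Gv etabar)$i = 0" by (simp add: etabar_eq')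
    ultimately show ?thesis using Inl by (simp add: B_Inl matrix_vector_mult_diff_distrib)
  next
    case (Inr j)
    have "eventually (\<lambda>t. 0 = (B *v (Gv (eta t) - Gv etabar)) $ n) at_top"
      by (rule eventually_mono[OF ev0]) (use inv Inr in \<open>simp add: B_Inr matrix_vector_mult_diff_distrib\<close>)
    from Lim_transform_eventually[OF tendsto_const this] show ?thesis by simp
  qed
qed

end


context gsol begin

lemma eta_range: "0 \<le> t \<Longrightarrow> eta t \<in> range (\<lambda>th. transpose B *v th)"
proof -
  assume t: "0 \<le> t"
  show ?thesis
  proof (rule perp_range, intro allI impI)
    fix z assume Bz: "B *v z = 0"
    have "\<exists>c. \<forall>x\<in>{0..}. z \<bullet> eta x = c"
    proof (rule has_field_derivative_zero_constant)
      fix x :: real assume x: "x \<in> {0..}"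
      have "((\<lambda>s. z \<bullet> eta s) has_vector_derivative z \<bullet> etad x) (at x within {0..})"
        by (rule bounded_linear.has_vector_derivative[OF bounded_linear_inner_right deta]) (use x in auto)
      moreover have "z \<bullet> etad x = 0"
        unfolding BSt_dec inner_mv by (simp add: Bz)
      ultimately show "((\<lambda>s. z \<bullet> eta s) has_field_derivative 0) (at x within {0..})"
        by (simp add: has_real_derivative_iff_has_vector_derivative)
    qed auto
    hence "z \<bullet> eta t = z \<bullet> eta 0" using t by fastforce
    moreover obtain th where "eta 0 = transpose B *v th" using eta0 by auto
    hence "z \<bullet> eta 0 = 0" by (simp add: inner_mv Bz)
    ultimately show "z \<bullet> eta t = 0" by simp
  qed
qed

lemma eta_lim: "(eta \<longlongrightarrow> etabar) at_top"
proof -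
  obtain C where C: "C > 0" "\<forall>v\<in>range (\<lambda>th. transpose B *v th). \<exists>th. transpose B *v th = v \<and> norm th \<le> C * norm v"
    using rinv by blast
  have c: "gmin * kap > 0" using gmin_pos kap_pos by simp
  have bound: "norm (eta t - etabar) \<le> C / (gmin * kap) * norm (B *v (Gv (eta t) - Gv etabar))" if t: "0 \<le> t" for t
  proof -
    let ?v = "eta t - etabar"
    let ?w = "Gv (eta t) - Gv etabar"
    obtain th1 where th1: "eta t = transpose B *v th1" using eta_range[OF t] by auto
    obtain th2 where th2: "etabar = transpose B *v th2" using etabar_im by auto
    have "?v \<in> range (\<lambda>th. transpose B *v th)"
      using th1 th2 by (auto simp: matrix_vector_mult_diff_distrib[symmetric])
    then obtain th where th: "transpose B *v th = ?v" "norm th \<le> C * norm ?v" using C by blast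
    have "gmin * kap * (norm ?v)^2 = (\<Sum>e\<in>UNIV. gmin * (kap * (?v$e)^2))"
      by (simp add: norm_sq_sum sum_distrib_left algebra_simps)
    also have "\<dots> \<le> (\<Sum>e\<in>UNIV. ?v$e * ?w$e)"
    proof (rule sum_mono)
      fix e
      have "kap * (?v$e)^2 \<le> ?v$e * (sin (eta t $ e) - sin (etabar $ e))"
        unfolding kap_def using sin_prod_bound[OF rho_lt region[OF incb[OF t]] region_bar] by simp
      moreover have "0 \<le> kap * (?v$e)^2" using kap_pos by simp
      ultimately have "gmin * (kap * (?v$e)^2) \<le> gamma$e * (?v$e * (sin (eta t $ e) - sin (etabar $ e)))"
        using gmin_le[of e] gmin_pos gamma_pos[rule_format, of e] by (rule_tac mult_mono) auto
      thus "gmin * (kap * (?v$e)^2) \<le> ?v$e * ?w$e" by (simp add: Gv_def algebra_simps)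
    qed
    also have "\<dots> = ?v \<bullet> ?w" by (simp add: inner_vec_def)
    also have "\<dots> = th \<bullet> (B *v ?w)" unfolding th(1)[symmetric] by (simp add: inner_mv inner_commute)
    also have "\<dots> \<le> norm th * norm (B *v ?w)" by (rule norm_cauchy_schwarz)
    also have "\<dots> \<le> C * norm ?v * norm (B *v ?w)" using th(2) by (intro mult_right_mono) auto
    finally have *: "gmin * kap * (norm ?v)^2 \<le> C * norm ?v * norm (B *v ?w)" .
    show ?thesis
    proof (cases "norm ?v = 0")
      case True thus ?thesis using C c by (simp del: norm_eq_zero)
    next
      case False
      hence "norm ?v > 0" by simp
      with * have "gmin * kap * norm ?v \<le> C * norm (B *v ?w)"
        by (simp add: power2_eq_square algebra_simps mult_le_cancel_left_pos)
      thus ?thesis using c by (simp add: field_simps)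
    qed
  qed
  have "((\<lambda>t. eta t - etabar) \<longlongrightarrow> 0) at_top"
  proof (rule Lim_null_comparison)
    show "eventually (\<lambda>t. norm (eta t - etabar) \<le> C / (gmin * kap) * norm (B *v (Gv (eta t) - Gv etabar))) at_top"
      by (rule eventually_mono[OF ev0]) (rule bound)
    show "((\<lambda>t. C / (gmin * kap) * norm (B *v (Gv (eta t) - Gv etabar))) \<longlongrightarrow> 0) at_top"
      using tendsto_mult[OF tendsto_const tendsto_norm[OF BGv_lim], of "C / (gmin * kap)"] by simp
  qed
  thus ?thesis by (simp add: Lim_null[symmetric])
qed

end



context plant begin

lemma Kin0: "Kin 0 = 0" by (simp add: Kin_def)
lemma Dr0: "Dr etabar = 0" by (simp add: Dr_def)
lemma Exi0: "Exi xib = 0" by (simp add: Exi_def)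

lemma isCont_Kin: "isCont Kin x"
proof -
  have "continuous_on UNIV Kin" unfolding Kin_def by (auto intro!: continuous_intros)
  thus ?thesis by (simp add: continuous_on_eq_continuous_at)
qed
lemma isCont_Dr: "isCont Dr x"
proof -
  have "continuous_on UNIV Dr" unfolding Dr_def by (auto intro!: continuous_intros)
  thus ?thesis by (simp add: continuous_on_eq_continuous_at)
qed
lemma isCont_Exi: "isCont Exi x"
proof -
  have "continuous_on UNIV Exi" unfolding Exi_def by (auto intro!: continuous_intros)
  thus ?thesis by (simp add: continuous_on_eq_continuous_at)
qed

lemma cont_init: "\<exists>\<delta>>0. \<forall>et (w::real^'g) x. dist et etabar < \<delta> \<longrightarrow> dist w 0 < \<delta> \<longrightarrow> dist x xib < \<delta> \<longrightarrow>
     Kin w + Dr et + Exi x < gmin * kap / 2 * rr^2 \<and> et \<in> ball etabar rr"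
proof -
  define thr where "thr = gmin * kap / 2 * rr^2"
  have thr: "thr / 3 > 0" using gmin_pos kap_pos rr_pos by (simp add: thr_def)
  obtain d1 where d1: "d1 > 0" "\<forall>x'. dist x' 0 < d1 \<longrightarrow> dist (Kin x') (Kin 0) < thr / 3"
    using isCont_Kin[of 0] thr unfolding continuous_at_eps_delta by blast
  obtain d2 where d2: "d2 > 0" "\<forall>x'. dist x' etabar < d2 \<longrightarrow> dist (Dr x') (Dr etabar) < thr / 3"
    using isCont_Dr[of etabar] thr unfolding continuous_at_eps_delta by blast
  obtain d3 where d3: "d3 > 0" "\<forall>x'. dist x' xib < d3 \<longrightarrow> dist (Exi x') (Exi xib) < thr / 3"
    using isCont_Exi[of xib] thr unfolding continuous_at_eps_delta by blast
  show ?thesis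
  proof (intro exI[of _ "min (min d1 d2) (min d3 rr)"] conjI allI impI)
    show "0 < min (min d1 d2) (min d3 rr)" using d1 d2 d3 rr_pos by simp
    fix et and w :: "real^'g" and x assume h: "dist et etabar < min (min d1 d2) (min d3 rr)" "dist w 0 < min (min d1 d2) (min d3 rr)"
      "dist x xib < min (min d1 d2) (min d3 rr)"
    have "\<bar>Kin w\<bar> < thr/3" "\<bar>Dr et\<bar> < thr/3" "\<bar>Exi x\<bar> < thr/3"
      using d1(2)[rule_format, of w] d2(2)[rule_format, of et] d3(2)[rule_format, of x] h
      by (simp_all add: Kin0 Dr0 Exi0 dist_real_def)
    thus "Kin w + Dr et + Exi x < gmin * kap / 2 * rr^2" unfolding thr_def by linarith
    show "et \<in> ball etabar rr" using h(1) by (simp add: dist_commute)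
  qed
qed

end

theorem theorem3:
  fixes B :: "real^'e::finite^('g::finite + 'l::finite)"
    and gamma :: "real^'e"
    and mm a q :: "real^'g"
    and LC :: "real^'g^'g"
    and etabar :: "real^'e"
    and pstar :: "real^'l"
    and lam :: real
    and ustar xibar :: "real^'g"
  assumes B_inc: "incidence_matrix B"
    and B_conn: "connected_incidence B"
    and gamma_pos: "\<forall>k. 0 < gamma$k"
    and M_pos: "\<forall>i. 0 < mm$i"
    and A_pos: "\<forall>i. 0 < a$i"
    and q_pos: "\<forall>i. 0 < q$i"
    and LC_lap: "comm_laplacian LC"
    and pstar_def: "pstar = rows_L B *v (diag_mat gamma *v vsin etabar)"
    and lam_def: "lam = (\<Sum>i\<in>UNIV. pstar$i) / (\<Sum>i\<in>UNIV. 1 / q$i)"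
    and ustar_def: "ustar = - (lam *s (\<chi> i. 1 / q$i))"
    and xibar_def: "xibar = diag_mat q *v ustar"
    and etabar_im: "etabar \<in> range (\<lambda>th. transpose B *v th)"
    and etabar_Omega: "etabar \<in> Omega"
    and etabar_eq: "0 = - ((rows_G B ** diag_mat gamma) *v vsin etabar) - lam *s (\<chi> i. 1 / q$i)"
  shows "\<exists>\<delta>>0. \<forall>(eta :: real \<Rightarrow> real^'e) (omega :: real \<Rightarrow> real^'g) (xi :: real \<Rightarrow> real^'g).
     ((\<forall>t\<ge>0.
         (eta has_vector_derivative
            (transpose (B_S (rows_G B) (rows_L B) gamma (eta t)) *v omega t)) (at t within {0..})
       \<and> (\<exists>w'. (omega has_vector_derivative w') (at t within {0..})
               \<and> diag_mat mm *v w' = - (diag_mat a *v omega t)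
                    - ((rows_G B ** diag_mat gamma) *v vsin (eta t))
                    + diag_mat (\<chi> i. 1 / q$i) *v xi t)
       \<and> (xi has_vector_derivative
            (- (LC *v xi t) - diag_mat (\<chi> i. 1 / q$i) *v omega t)) (at t within {0..}))
      \<and> eta 0 \<in> range (\<lambda>th. transpose B *v th)
      \<and> rows_L B *v (diag_mat gamma *v vsin (eta 0)) = rows_L B *v (diag_mat gamma *v vsin etabar)
      \<and> dist (eta 0) etabar < \<delta> \<and> dist (omega 0) 0 < \<delta> \<and> dist (xi 0) xibar < \<delta>)
     \<longrightarrow> (eta \<longlongrightarrow> etabar) at_top \<and> (omega \<longlongrightarrow> 0) at_top \<and> (xi \<longlongrightarrow> xibar) at_top
         \<and> ((\<lambda>t. diag_mat (\<chi> i. 1 / q$i) *v xi t) \<longlongrightarrow> ustar) at_top"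
proof -
  interpret P: plant B gamma mm a q LC etabar lam
    by unfold_locales (rule B_inc B_conn gamma_pos M_pos A_pos q_pos LC_lap etabar_im etabar_Omega etabar_eq)+
  have xibar: "xibar = P.xib"
  proof -
    have "q$i \<noteq> 0" for i using q_pos by (metis less_irrefl)
    thus ?thesis by (simp add: xibar_def ustar_def P.xib_def vec_eq_iff diag_mult)
  qed
  have ustar: "ustar = diag_mat (\<chi> i. 1 / q$i) *v P.xib"
    by (simp add: ustar_def P.xib_def vec_eq_iff diag_mult)
  obtain \<delta> where \<delta>: "\<delta> > 0" "\<forall>et (w::real^'g) x. dist et etabar < \<delta> \<longrightarrow> dist w 0 < \<delta> \<longrightarrow> dist x P.xib < \<delta> \<longrightarrow>
     P.Kin w + P.Dr et + P.Exi x < P.gmin * P.kap / 2 * P.rr^2 \<and> et \<in> ball etabar P.rr"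
    using P.cont_init by blast
  show ?thesis
  proof (intro exI[of _ \<delta>] conjI allI impI \<delta>(1))
    fix eta :: "real \<Rightarrow> real^'e" and omega xi :: "real \<Rightarrow> real^'g"
    assume H: "(\<forall>t\<ge>0.
         (eta has_vector_derivative
            (transpose (B_S (rows_G B) (rows_L B) gamma (eta t)) *v omega t)) (at t within {0..})
       \<and> (\<exists>w'. (omega has_vector_derivative w') (at t within {0..})
               \<and> diag_mat mm *v w' = - (diag_mat a *v omega t)
                    - ((rows_G B ** diag_mat gamma) *v vsin (eta t))
                    + diag_mat (\<chi> i. 1 / q$i) *v xi t)
       \<and> (xi has_vector_derivative
            (- (LC *v xi t) - diag_mat (\<chi> i. 1 / q$i) *v omega t)) (at t within {0..}))
      \<and> eta 0 \<in> range (\<lambda>th. transpose B *v th)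
      \<and> rows_L B *v (diag_mat gamma *v vsin (eta 0)) = rows_L B *v (diag_mat gamma *v vsin etabar)
      \<and> dist (eta 0) etabar < \<delta> \<and> dist (omega 0) 0 < \<delta> \<and> dist (xi 0) xibar < \<delta>"
    define W where "W t = (SOME w'. (omega has_vector_derivative w') (at t within {0..})
               \<and> diag_mat mm *v w' = - (diag_mat a *v omega t)
                    - ((rows_G B ** diag_mat gamma) *v vsin (eta t))
                    + diag_mat (\<chi> i. 1 / q$i) *v xi t)" for t
    have HW: "(omega has_vector_derivative W t) (at t within {0..})
               \<and> diag_mat mm *v W t = - (diag_mat a *v omega t)
                    - ((rows_G B ** diag_mat gamma) *v vsin (eta t))
                    + diag_mat (\<chi> i. 1 / q$i) *v xi t" if t: "0 \<le> t" for t
      unfolding W_def by (rule someI_ex) (use H t in blast)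
    interpret S: sol B gamma mm a q LC etabar lam eta omega xi W
      by unfold_locales (use H HW in auto)
    have V0: "S.Vt 0 < P.gmin * P.kap / 2 * P.rr^2" and e0: "eta 0 \<in> ball etabar P.rr"
      using \<delta>(2)[rule_format, of "eta 0" "omega 0" "xi 0"] H xibar unfolding S.Vt_def by auto
    interpret G: gsol B gamma mm a q LC etabar lam eta omega xi W
      by unfold_locales (rule V0 e0)+
    show "(eta \<longlongrightarrow> etabar) at_top" by (rule G.eta_lim)
    show "(omega \<longlongrightarrow> 0) at_top" by (rule G.omega_lim)
    show "(xi \<longlongrightarrow> xibar) at_top" unfolding xibar by (rule G.xi_lim)
    show "((\<lambda>t. diag_mat (\<chi> i. 1 / q$i) *v xi t) \<longlongrightarrow> ustar) at_top"
      unfolding ustar by (rule bounded_linear.tendsto[OF matrix_vector_mul_bounded_linear G.xi_lim])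
  qed
qed



end
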